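(* Let $w \doteq \delta^n \tau_1^{u_1}\tau_2^{u_2}\cdots\tau_t^{u_t}$ be a word with $n\in\mathbb{Z}$, $t\geq 0$ and all $u_i\geq 1$. Then $w$ is in Xu normal form if and only if one of the following holds: (a) $t=0$, i.e. $w\doteq\delta^n$; (b) $t=1$, and if $n\equiv 1 \pmod 3$ then $u_1=1$ (so $w\doteq \delta^{3k}a^{u_1}$, or $w\doteq\delta^{3k+1}a$, or $w\doteq\delta^{3k+2}a^{u_1}$ for some $k\in\mathbb{Z}$); (c) $t\geq 2$, $n+t\equiv 0\pmod 3$, and the tuple $(u_1,\dots,u_t)$ is lexicographically minimal among all its cyclic permutations.
   Context: $B_3=\langle a,b\mid aba=bab\rangle$. Set $x=a^{-1}ba$ and $\delta=ba$ (so $\delta=ax=xb$). For $i\in\mathbb{Z}$ let $\tau_i=a$ if $i\equiv 1\pmod 3$, $\tau_i=b$ if $i\equiv 2\pmod 3$, $\tau_i=x$ if $i\equiv 0\pmod 3$. A (Xu) word is a word in the letters $a,b,x,\delta$ and their inverses; $\doteq$ denotes equality of words, $=$ equality of braids. A word $w\doteq\delta^n\tau_1^{u_1}\cdots\tau_t^{u_t}$ with $n\in\mathbb{Z}$, $t\geq 0$, $u_i\geq 1$ is in Xu normal form if the tuple $(-n,t,u_1,\dots,u_t)$ is lexicographically minimal among all words of this form representing braids in the same conjugacy class of $B_3$. (Every 3-braid is conjugate to a unique word in Xu normal form.) *)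

theory Defs
  imports Main
begin

text \<open>Braid group B_3 given by the presentation with generators a, b and relation aba = bab.
  Words over a, b and their inverses; a letter is (generator, sign) with True = positive.\<close>

datatype ab = GA | GB

type_synonym abword = "(ab \<times> bool) list"

definition inv_word :: "abword \<Rightarrow> abword" where
  "inv_word w = rev (map (\<lambda>(g, s). (g, \<not> s)) w)"

inductive braid_eq :: "abword \<Rightarrow> abword \<Rightarrow> bool" where
  refl: "braid_eq w w"
| sym: "braid_eq u v \<Longrightarrow> braid_eq v u"
| trans: "braid_eq u v \<Longrightarrow> braid_eq v w \<Longrightarrow> braid_eq u w"
| cancel: "braid_eq (u @ [(g, s), (g, \<not> s)] @ v) (u @ v)"
| braid_rel: "braid_eq (u @ [(GA, True), (GB, True), (GA, True)] @ v)
                       (u @ [(GB, True), (GA, True), (GB, True)] @ v)"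

definition braid_conj :: "abword \<Rightarrow> abword \<Rightarrow> bool" where
  "braid_conj v w \<longleftrightarrow> (\<exists>g. braid_eq (g @ v @ inv_word g) w)"

datatype xu = La | Lb | Lx | Ld

fun xu_val :: "xu \<Rightarrow> abword" where
  "xu_val La = [(GA, True)]"
| "xu_val Lb = [(GB, True)]"
| "xu_val Lx = [(GA, False), (GB, True), (GA, True)]"
| "xu_val Ld = [(GB, True), (GA, True)]"

definition xu_eval :: "(xu \<times> bool) list \<Rightarrow> abword" where
  "xu_eval w = concat (map (\<lambda>(l, s). if s then xu_val l else inv_word (xu_val l)) w)"

definition tau :: "nat \<Rightarrow> xu" where
  "tau i = (if i mod 3 = 1 then La else if i mod 3 = 2 then Lb else Lx)"

text \<open>The word delta^n tau_1^{u_1} ... tau_t^{u_t}, where us = [u_1,...,u_t].\<close>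
definition xu_word :: "int \<Rightarrow> nat list \<Rightarrow> (xu \<times> bool) list" where
  "xu_word n us = replicate (nat \<bar>n\<bar>) (Ld, n \<ge> 0)
     @ concat (map (\<lambda>i. replicate (us ! i) (tau (Suc i), True)) [0..<length us])"

definition lex_le :: "nat list \<Rightarrow> nat list \<Rightarrow> bool" where
  "lex_le us vs \<longleftrightarrow> us = vs \<or> (us, vs) \<in> lexord {(x, y). x < y}"

text \<open>Lexicographic (non-strict) order on tuples (-n, t, u_1, ..., u_t).\<close>
definition xu_tuple_le :: "int \<Rightarrow> nat list \<Rightarrow> int \<Rightarrow> nat list \<Rightarrow> bool" where
  "xu_tuple_le n us n' us' \<longleftrightarrow>
     - n < - n' \<or> (n = n' \<and> (length us < length us' \<or>
        (length us = length us' \<and> lex_le us us')))"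

definition in_xu_nf :: "int \<Rightarrow> nat list \<Rightarrow> bool" where
  "in_xu_nf n us \<longleftrightarrow> (\<forall>n' us'. (\<forall>u\<in>set us'. u \<ge> 1) \<and>
      braid_conj (xu_eval (xu_word n us)) (xu_eval (xu_word n' us'))
        \<longrightarrow> xu_tuple_le n us n' us')"

end

theory Submission
  imports Defs
begin



datatype fl = R | Sp | Sm

fun finv :: "fl \<Rightarrow> fl" where
  "finv R = R" | "finv Sp = Sm" | "finv Sm = Sp"

fun comb :: "fl \<Rightarrow> fl \<Rightarrow> fl list option" where
  "comb R R = Some []"
| "comb Sp Sp = Some [Sm]"
| "comb Sm Sm = Some [Sp]"
| "comb Sp Sm = Some []"
| "comb Sm Sp = Some []"
| "comb _ _ = None"

fun push :: "fl \<Rightarrow> fl list \<Rightarrow> fl list" where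
  "push c [] = [c]"
| "push c (d # w) = (case comb c d of None \<Rightarrow> c # d # w | Some f \<Rightarrow> f @ w)"

definition red :: "fl list \<Rightarrow> fl list" where
  "red w = foldr push w []"

fun rd :: "fl list \<Rightarrow> bool" where
  "rd [] = True" | "rd [c] = True" | "rd (c # d # w) = (comb c d = None \<and> rd (d # w))"

definition pr :: "fl \<Rightarrow> fl \<Rightarrow> fl list" where
  "pr c d = (case comb c d of None \<Rightarrow> [c, d] | Some f \<Rightarrow> f)"

lemma rd_tl: "rd (c # w) \<Longrightarrow> rd w"
  by (cases w) auto

lemma rd_push: "rd w \<Longrightarrow> rd (push c w)"
  apply (cases w rule: rd.cases)
    apply simp
  subgoal for d by (cases c; cases d; simp)
  subgoal for d e w'
    apply (cases w')
     apply (cases c; cases d; cases e; simp)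
    subgoal for f w''
      apply (cases c; cases d; cases e; cases f; simp)
      done
    done
  done

lemma rd_foldr: "rd y \<Longrightarrow> rd (foldr push x y)"
  by (induction x) (auto intro: rd_push)

lemma rd_red: "rd (red w)"
  unfolding red_def by (rule rd_foldr) simp

lemma red_rd: "rd w \<Longrightarrow> red w = w"
proof (induction w)
  case Nil then show ?case by (simp add: red_def)
next
  case (Cons c w)
  then have "red w = w" using rd_tl by blast
  then show ?case using Cons.prems by (cases w) (auto simp: red_def)
qed

lemma push_push: "rd z \<Longrightarrow> push c (push d z) = foldr push (pr c d) z"
  apply (cases z)
   apply (cases c; cases d; simp add: pr_def)
  subgoal for e z'
    apply (cases z')
     apply (cases c; cases d; cases e; simp add: pr_def)
    subgoal for e' z''
      apply (cases c; cases d; cases e; cases e'; simp add: pr_def)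
      done
    done
  done

lemma push_foldr: "rd x \<Longrightarrow> rd y \<Longrightarrow> push c (foldr push x y) = foldr push (push c x) y"
proof (cases x)
  case Nil then show ?thesis by simp
next
  case (Cons d x')
  assume "rd x" "rd y"
  then have r: "rd (foldr push x' y)" using Cons rd_tl rd_foldr by blast
  have "push c (foldr push x y) = foldr push (pr c d) (foldr push x' y)"
    using Cons push_push[OF r] by simp
  also have "\<dots> = foldr push (push c x) y"
    using Cons by (simp add: pr_def split: option.splits)
  finally show ?thesis .
qed

lemma foldr_red: "rd y \<Longrightarrow> foldr push u y = foldr push (red u) y"
proof (induction u)
  case Nil then show ?case by (simp add: red_def)
next
  case (Cons c u)
  have "foldr push (c # u) y = push c (foldr push (red u) y)" using Cons by simp
  also have "\<dots> = foldr push (push c (red u)) y"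
    by (rule push_foldr[OF rd_red Cons.prems])
  finally show ?case by (simp add: red_def)
qed

lemma red_append: "red (u @ v) = foldr push u (red v)"
  by (simp add: red_def)

lemma red_app2: "red (X @ Y) = red (red X @ red Y)"
proof -
  have "red (X @ Y) = foldr push X (red Y)" by (simp add: red_append)
  also have "\<dots> = foldr push (red X) (red Y)" using foldr_red rd_red by blast
  also have "\<dots> = red (red X @ red Y)" by (simp add: red_append red_rd rd_red)
  finally show ?thesis .
qed

lemma red_red: "red (red X) = red X"
  by (simp add: red_rd rd_red)

definition eqv :: "fl list \<Rightarrow> fl list \<Rightarrow> bool" where
  "eqv X Y \<longleftrightarrow> red X = red Y"

lemma eqv_refl[simp]: "eqv X X" by (simp add: eqv_def)
lemma eqv_sym: "eqv X Y \<Longrightarrow> eqv Y X" by (simp add: eqv_def)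
lemma eqv_trans: "eqv X Y \<Longrightarrow> eqv Y Z \<Longrightarrow> eqv X Z" by (simp add: eqv_def)
lemma eqv_app: "eqv X X' \<Longrightarrow> eqv Y Y' \<Longrightarrow> eqv (X @ Y) (X' @ Y')"
  unfolding eqv_def by (metis red_app2)
lemma eqv_red: "eqv X (red X)" by (simp add: eqv_def red_red)

fun phi :: "ab \<times> bool \<Rightarrow> fl list" where
  "phi (GA, True) = [R, Sm]"
| "phi (GB, True) = [Sm, R]"
| "phi (GA, False) = [Sp, R]"
| "phi (GB, False) = [R, Sp]"

definition Phi :: "abword \<Rightarrow> fl list" where
  "Phi w = concat (map phi w)"

lemma Phi_append[simp]: "Phi (u @ v) = Phi u @ Phi v" by (simp add: Phi_def)
lemma Phi_Cons: "Phi (x # v) = phi x @ Phi v" by (simp add: Phi_def)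
lemma Phi_Nil[simp]: "Phi [] = []" by (simp add: Phi_def)

lemma braid_eq_red: "braid_eq u v \<Longrightarrow> red (Phi u) = red (Phi v)"
proof (induction rule: braid_eq.induct)
  case (cancel u g s v)
  have "eqv (phi (g, s) @ phi (g, \<not> s)) []"
    by (cases g; cases s; simp add: eqv_def red_def)
  then have "eqv (Phi u @ (phi (g, s) @ phi (g, \<not> s)) @ Phi v) (Phi u @ [] @ Phi v)"
    by (intro eqv_app) auto
  then show ?case by (simp add: eqv_def Phi_Cons)
next
  case (braid_rel u v)
  have h: "eqv (phi (GA,True) @ phi (GB,True) @ phi (GA,True)) (phi (GB,True) @ phi (GA,True) @ phi (GB,True))"
    by (simp add: eqv_def red_def)
  then have "eqv (Phi u @ (phi (GA,True) @ phi (GB,True) @ phi (GA,True)) @ Phi v)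
    (Phi u @ (phi (GB,True) @ phi (GA,True) @ phi (GB,True)) @ Phi v)"
    using eqv_app[OF eqv_refl[of "Phi u"] eqv_app[OF h eqv_refl[of "Phi v"]]] by simp
  then show ?case by (simp add: eqv_def Phi_Cons)
qed auto

definition invl :: "fl list \<Rightarrow> fl list" where
  "invl X = rev (map finv X)"

lemma Phi_inv: "Phi (inv_word g) = invl (Phi g)"
proof (induction g)
  case Nil then show ?case by (simp add: inv_word_def invl_def)
next
  case (Cons l g)
  obtain x s where l: "l = (x, s)" by force
  have "inv_word (l # g) = inv_word g @ [(x, \<not> s)]" by (simp add: inv_word_def l)
  then show ?case using Cons by (cases x; cases s; simp add: l invl_def Phi_Cons)
qed

fun ty :: "fl \<Rightarrow> bool" where
  "ty R = False" | "ty Sp = True" | "ty Sm = True"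

lemma comb_None: "comb x y = None \<longleftrightarrow> ty x \<noteq> ty y"
  by (cases x; cases y; simp)

lemma comb_len: "comb x y = Some f \<Longrightarrow> length f \<le> 1"
  by (cases x; cases y; auto)

lemma rd_snoc: "rd W \<Longrightarrow> red (W @ [c]) = (if W = [] then [c] else
   (case comb (last W) c of None \<Rightarrow> W @ [c] | Some f \<Rightarrow> butlast W @ f))"
proof (induction W rule: rd.induct)
  case 1 then show ?case by (simp add: red_def)
next
  case (2 d) then show ?case by (cases "comb d c") (simp_all add: red_def)
next
  case (3 d e w)
  have IH: "red ((e # w) @ [c]) = (case comb (last (e # w)) c of None \<Rightarrow> (e # w) @ [c]
     | Some f \<Rightarrow> butlast (e # w) @ f)" using 3 by simp
  have eq: "red ((d # e # w) @ [c]) = push d (red ((e # w) @ [c]))" by (simp add: red_def)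
  show ?case
  proof (cases "comb (last (e # w)) c")
    case None
    then show ?thesis using eq IH 3(2) by simp
  next
    case (Some f)
    show ?thesis
    proof (cases w)
      case Nil
      then show ?thesis using eq IH 3(2) Some
        by (cases d; cases e; cases c; auto simp: red_def)
    next
      case (Cons x w')
      then show ?thesis using eq IH 3(2) Some by simp
    qed
  qed
qed

function cyc :: "fl list \<Rightarrow> fl list" where
  "cyc w = (if length w \<le> 1 then w else (case comb (last w) (hd w) of None \<Rightarrow> w
      | Some f \<Rightarrow> cyc (f @ butlast (tl w))))"
  by pat_completeness auto
termination
  apply (relation "measure length")
   apply simp
  apply (drule comb_len)
  apply simp
  done

declare cyc.simps[simp del]

lemma cyc_short[simp]: "length w \<le> 1 \<Longrightarrow> cyc w = w"
  by (simp add: cyc.simps)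

lemma cyc_stop: "2 \<le> length w \<Longrightarrow> ty (last w) \<noteq> ty (hd w) \<Longrightarrow> cyc w = w"
proof -
  assume a: "2 \<le> length w" "ty (last w) \<noteq> ty (hd w)"
  then have "comb (last w) (hd w) = None" using comb_None by simp
  then show ?thesis using a by (subst cyc.simps) simp
qed

lemma cyc_step: "2 \<le> length w \<Longrightarrow> ty (last w) = ty (hd w) \<Longrightarrow>
   cyc w = cyc (the (comb (last w) (hd w)) @ butlast (tl w))"
  apply (subst cyc.simps)
  apply (cases "comb (last w) (hd w)")
   apply (simp add: comb_None)
  apply simp
  done

definition rot :: "fl list \<Rightarrow> fl list \<Rightarrow> bool" where
  "rot X Y \<longleftrightarrow> (\<exists>k. X = rotate k Y)"

lemma rot_refl[simp]: "rot X X"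
  unfolding rot_def by (rule exI[of _ 0]) simp

lemma rot_trans: "rot X Y \<Longrightarrow> rot Y Z \<Longrightarrow> rot X Z"
  unfolding rot_def by (auto simp: rotate_rotate)

lemma rot_sym: "rot X Y \<Longrightarrow> rot Y X"
  unfolding rot_def
proof (elim exE)
  fix k assume X: "X = rotate k Y"
  let ?l = "length Y"
  have "rotate (?l - k mod ?l) X = rotate (?l - k mod ?l + k) Y" using X by (simp add: rotate_rotate)
  also have "\<dots> = Y"
  proof (cases "Y = []")
    case False
    then have "?l > 0" by simp
    have "k mod ?l \<le> k" by simp
    then have "?l - k mod ?l + k = ?l * Suc (k div ?l)"
      using \<open>?l > 0\<close> by (metis add.commute add_diff_assoc2 minus_mod_eq_mult_div mod_less_divisor less_imp_le mult_Suc_right)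
    then have "(?l - k mod ?l + k) mod ?l = 0"
      by simp
    then show ?thesis by (rule rotate_id)
  qed simp
  finally have "rotate (?l - k mod ?l) X = Y" .
  then show "\<exists>k. Y = rotate k X" by (intro exI[of _ "?l - k mod ?l"]) simp
qed

lemma rot_snoc2: "rot (L @ [x]) (x # L)"
  unfolding rot_def by (rule exI[of _ 1]) simp

lemma rot_snoc: "rot (x # L) (L @ [x])"
  by (rule rot_sym[OF rot_snoc2])

lemma rot_swap: "rot [x, y] [y, x]"
  using rot_snoc2[of "[x]" y] by simp

lemma rot_r3: "rot (x # y # L) (y # L @ [x])" using rot_snoc[of x "y # L"] by simp
lemma rot_r4: "rot (y # L @ [x]) (x # y # L)" using rot_snoc2[of "y # L" x] by simp
lemma rot_r5: "rot (L @ [y, x]) (x # L @ [y])" using rot_snoc2[of "L @ [y]" x] by simp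
lemma rot_r6: "rot (x # L @ [y]) (L @ [y, x])" using rot_snoc[of x "L @ [y]"] by simp
lemmas rots = rot_snoc rot_snoc2 rot_swap rot_r3 rot_r4 rot_r5 rot_r6

lemma rd_ends:
  assumes "rd (d # M @ [e])"
  shows "M = [] \<Longrightarrow> ty d \<noteq> ty e"
    and "M \<noteq> [] \<Longrightarrow> ty (hd M) \<noteq> ty d"
    and "M \<noteq> [] \<Longrightarrow> ty (last M) \<noteq> ty e"
proof -
  show "M = [] \<Longrightarrow> ty d \<noteq> ty e" using assms by (simp add: comb_None)
  show "M \<noteq> [] \<Longrightarrow> ty (hd M) \<noteq> ty d" using assms by (cases M) (auto simp: comb_None)
  show "M \<noteq> [] \<Longrightarrow> ty (last M) \<noteq> ty e"
  proof -
    assume "M \<noteq> []"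
    have "\<And>x. rd (x # M @ [e]) \<Longrightarrow> ty (last M) \<noteq> ty e"
      using \<open>M \<noteq> []\<close>
    proof (induction M)
      case (Cons a M)
      show ?case
      proof (cases M)
        case Nil then show ?thesis using Cons.prems by (auto simp: comb_None)
      next
        case (Cons b M')
        then show ?thesis using Cons.IH[of a] Cons.prems by auto
      qed
    qed simp
    then show ?thesis using assms .
  qed
qed

lemma conj1:
  assumes "rd W"
  shows "rot (cyc (red (c # W @ [finv c]))) (cyc W)"
proof -
  consider "W = []" | h where "W = [h]" | d M e where "W = d # M @ [e]"
    by (metis neq_Nil_conv rev_exhaust)
  then show ?thesis
  proof cases
    case 1 then show ?thesis by (cases c; simp add: red_def)
  next
    case 2 then show ?thesis
      by (cases c; cases h; simp add: red_def cyc_step)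
  next
    case 3
    note W = 3
    have T: "red (c # W @ [finv c]) = push c (red (W @ [finv c]))" by (simp add: red_def)
    have S: "red (W @ [finv c]) = (case comb e (finv c) of None \<Rightarrow> d # M @ [e, finv c]
        | Some f \<Rightarrow> d # M @ f)"
      using rd_snoc[OF assms, of "finv c"] W by (simp split: option.splits)
    note E = rd_ends[OF assms[unfolded W]]
    show ?thesis
    proof (cases "M = []")
      case True
      then show ?thesis using T S W E
        by (cases c; cases d; cases e; simp add: cyc_step cyc_stop rots)
    next
      case False
      then have "length M \<ge> 1" by (cases M) auto
      then show ?thesis using T S W E False
        by (cases c; cases d; cases e; simp add: cyc_step cyc_stop rots hd_append butlast_append)
    qed
  qed
qed

lemma invl_Cons: "invl (c # G) = invl G @ [finv c]"
  by (simp add: invl_def)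

lemma conjG:
  assumes "rd W"
  shows "rot (cyc (red (G @ W @ invl G))) (cyc W)"
proof (induction G)
  case Nil then show ?case using assms by (simp add: invl_def red_rd)
next
  case (Cons c G)
  let ?X = "G @ W @ invl G"
  have "eqv ([c] @ ?X @ [finv c]) ([c] @ red ?X @ [finv c])"
    by (intro eqv_app eqv_red eqv_refl)
  then have e: "red ((c # G) @ W @ invl (c # G)) = red (c # red ?X @ [finv c])"
    by (simp add: eqv_def invl_Cons)
  show ?case unfolding e
    using rot_trans[OF conj1[OF rd_red] Cons.IH] .
qed

lemma conj_inv:
  assumes "braid_conj v w"
  shows "rot (cyc (red (Phi w))) (cyc (red (Phi v)))"
proof -
  obtain g where g: "braid_eq (g @ v @ inv_word g) w" using assms by (auto simp: braid_conj_def)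
  have "red (Phi w) = red (Phi g @ Phi v @ invl (Phi g))"
    using braid_eq_red[OF g] by (simp add: Phi_inv)
  also have "\<dots> = red (Phi g @ red (Phi v) @ invl (Phi g))"
    using eqv_app[OF eqv_refl eqv_app[OF eqv_red eqv_refl]] by (simp add: eqv_def)
  finally show ?thesis using conjG[OF rd_red] by simp
qed

definition ex :: "abword \<Rightarrow> int" where
  "ex w = sum_list (map (\<lambda>(g, s). if s then 1 else -1) w)"

lemma ex_append[simp]: "ex (u @ v) = ex u + ex v" by (simp add: ex_def)

lemma braid_eq_ex: "braid_eq u v \<Longrightarrow> ex u = ex v"
  by (induction rule: braid_eq.induct) (auto simp: ex_def)

lemma ex_inv: "ex (inv_word g) = - ex g"
  by (induction g) (auto simp: ex_def inv_word_def)

lemma conj_ex: "braid_conj v w \<Longrightarrow> ex v = ex w"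
  unfolding braid_conj_def using braid_eq_ex ex_inv by fastforce




abbreviation beq (infix "\<approx>" 50) where "u \<approx> v \<equiv> braid_eq u v"

lemma beq_ctx: "u \<approx> v \<Longrightarrow> p @ u @ q \<approx> p @ v @ q"
proof (induction arbitrary: p q rule: braid_eq.induct)
  case (refl w) then show ?case by (rule braid_eq.refl)
next
  case (sym u v) then show ?case by (blast intro: braid_eq.sym)
next
  case (trans u v w) then show ?case by (blast intro: braid_eq.trans)
next
  case (cancel u g s v)
  have "(p @ u) @ [(g, s), (g, \<not> s)] @ (v @ q) \<approx> (p @ u) @ (v @ q)" by (rule braid_eq.cancel)
  then show ?case by simp
next
  case (braid_rel u v)
  have "(p @ u) @ [(GA, True), (GB, True), (GA, True)] @ (v @ q) \<approx>
        (p @ u) @ [(GB, True), (GA, True), (GB, True)] @ (v @ q)" by (rule braid_eq.braid_rel)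
  then show ?case by simp
qed

lemma beq_app: "a \<approx> a' \<Longrightarrow> b \<approx> b' \<Longrightarrow> a @ b \<approx> a' @ b'"
proof -
  assume "a \<approx> a'" "b \<approx> b'"
  then have "[] @ a @ b \<approx> [] @ a' @ b" "a' @ b @ [] \<approx> a' @ b' @ []" using beq_ctx by blast+
  then show ?thesis using braid_eq.trans by simp
qed

lemmas bt = braid_eq.trans
lemmas bs = braid_eq.sym
lemmas br = braid_eq.refl
declare braid_eq.trans[trans]

lemma inv_word_inv[simp]: "inv_word (inv_word w) = w"
  by (induction w) (auto simp: inv_word_def)

lemma inv_word_app[simp]: "inv_word (u @ v) = inv_word v @ inv_word u"
  by (simp add: inv_word_def)

lemma inv_word_Nil[simp]: "inv_word [] = []" by (simp add: inv_word_def)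

lemma inv_cancel: "w @ inv_word w \<approx> []"
proof (induction w)
  case Nil then show ?case by (simp add: br)
next
  case (Cons x w)
  obtain g s where x: "x = (g, s)" by force
  have "[x] @ (w @ inv_word w) @ [(g, \<not> s)] \<approx> [x] @ [] @ [(g, \<not> s)]"
    using beq_ctx[OF Cons.IH] by blast
  moreover have "[] @ [(g, s), (g, \<not> s)] @ [] \<approx> [] @ []" by (rule braid_eq.cancel)
  ultimately show ?case using bt x by (auto simp: inv_word_def)
qed

lemma inv_cancel2: "inv_word w @ w \<approx> []"
  using inv_cancel[of "inv_word w"] by simp

definition D :: abword where "D = [(GB, True), (GA, True)]"
definition D' :: abword where "D' = inv_word D"

lemma DD': "D @ D' \<approx> []" unfolding D'_def by (rule inv_cancel)
lemma D'D: "D' @ D \<approx> []" unfolding D'_def by (rule inv_cancel2)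

definition dp :: "int \<Rightarrow> abword" where
  "dp n = concat (replicate (nat \<bar>n\<bar>) (if n \<ge> 0 then D else D'))"

lemma dp0[simp]: "dp 0 = []" by (simp add: dp_def)
lemma dp1: "dp 1 = D" by (simp add: dp_def)
lemma dpm1: "dp (-1) = D'" by (simp add: dp_def)

lemma dp_pos: "n \<ge> 0 \<Longrightarrow> dp (n + 1) = dp n @ D"
proof -
  assume "n \<ge> 0"
  then have "nat \<bar>n + 1\<bar> = Suc (nat \<bar>n\<bar>)" by simp
  then show ?thesis using \<open>n \<ge> 0\<close> by (simp add: dp_def replicate_append_same[symmetric])
qed

lemma dp_neg: "n < 0 \<Longrightarrow> dp n = dp (n + 1) @ D'"
proof -
  assume "n < 0"
  then have "nat \<bar>n\<bar> = Suc (nat \<bar>n + 1\<bar>)" by simp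
  then show ?thesis using \<open>n < 0\<close> by (simp add: dp_def replicate_append_same[symmetric])
qed

lemma dp_sucR: "dp n @ D \<approx> dp (n + 1)"
proof (cases "n \<ge> 0")
  case True then show ?thesis by (simp add: dp_pos br)
next
  case False
  then have "dp n @ D = dp (n + 1) @ D' @ D" using dp_neg by simp
  also have "\<dots> \<approx> dp (n + 1) @ []" by (rule beq_app[OF br D'D])
  finally show ?thesis by simp
qed

lemma dp_predR: "dp n @ D' \<approx> dp (n - 1)"
proof (cases "n - 1 < 0")
  case True then show ?thesis using dp_neg[of "n - 1"] by (simp add: br)
next
  case False
  then have "dp n @ D' = dp (n - 1) @ D @ D'" using dp_pos[of "n - 1"] by simp
  also have "\<dots> \<approx> dp (n - 1) @ []" by (rule beq_app[OF br DD'])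
  finally show ?thesis by simp
qed

lemma dp_add: "dp a @ dp b \<approx> dp (a + b)"
proof (induction b rule: int_induct[where k = 0])
  case base then show ?case by (simp add: br)
next
  case (step1 i)
  have "dp a @ dp (i + 1) \<approx> dp a @ (dp i @ D)" by (rule beq_app[OF br bs[OF dp_sucR]])
  also have "dp a @ (dp i @ D) = (dp a @ dp i) @ D" by simp
  also have "\<dots> \<approx> dp (a + i) @ D" by (rule beq_app[OF step1.IH br])
  also have "\<dots> \<approx> dp (a + (i + 1))" using dp_sucR[of "a + i"] by (simp add: add.assoc)
  finally show ?case .
next
  case (step2 i)
  have "dp a @ dp (i - 1) \<approx> dp a @ (dp i @ D')" by (rule beq_app[OF br bs[OF dp_predR]])
  also have "dp a @ (dp i @ D') = (dp a @ dp i) @ D'" by simp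
  also have "\<dots> \<approx> dp (a + i) @ D'" by (rule beq_app[OF step2.IH br])
  also have "\<dots> \<approx> dp (a + (i - 1))" using dp_predR[of "a + i"] by (simp add: algebra_simps)
  finally show ?case .
qed

definition tauI :: "int \<Rightarrow> xu" where
  "tauI i = (if i mod 3 = 1 then La else if i mod 3 = 2 then Lb else Lx)"

definition Tw :: "int \<Rightarrow> abword" where "Tw i = xu_val (tauI i)"

lemma Tw_cong: "i mod 3 = k mod 3 \<Longrightarrow> Tw i = Tw k"
  by (simp add: Tw_def tauI_def)

lemma mod3_cases: "(i::int) mod 3 = 0 \<or> i mod 3 = 1 \<or> i mod 3 = 2" by presburger

lemma Tw_D: "Tw i @ D \<approx> D @ Tw (i + 1)"
proof -
  consider "i mod 3 = 1" | "i mod 3 = 2" | "i mod 3 = 0" using mod3_cases by blast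
  then show ?thesis
  proof cases
    case 1
    then have "(i + 1) mod 3 = 2" by presburger
    then show ?thesis using 1
      using braid_eq.braid_rel[of "[]" "[]"] by (simp add: Tw_def tauI_def D_def)
  next
    case 2
    then have "(i + 1) mod 3 = 0" by presburger
    then show ?thesis using 2
      using bs[OF braid_eq.cancel[of "[(GB,True)]" GA True "[(GB,True),(GA,True)]"]]
      by (simp add: Tw_def tauI_def D_def)
  next
    case 3
    then have "(i + 1) mod 3 = 1" by presburger
    have a: "[(GA,False),(GB, True), (GA, True), (GB, True),(GA,True)] \<approx>
             [(GA,False),(GA, True), (GB, True), (GA, True),(GA,True)]"
      using bs[OF braid_eq.braid_rel[of "[(GA,False)]" "[(GA,True)]"]] by simp
    have b: "[(GA,False), (GA, True),(GB, True), (GA, True), (GA,True)] \<approx>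
             [(GB, True), (GA, True), (GA,True)]"
      using braid_eq.cancel[of "[]" GA False "[(GB, True), (GA, True), (GA,True)]"] by simp
    show ?thesis using 3 \<open>(i + 1) mod 3 = 1\<close> bt[OF a b]
      by (simp add: Tw_def tauI_def D_def)
  qed
qed

lemma Tw_D': "Tw i @ D' \<approx> D' @ Tw (i - 1)"
proof -
  have "Tw i @ D' \<approx> (D' @ D) @ Tw i @ D'" using beq_app[OF bs[OF D'D] br] by simp
  also have "\<dots> = D' @ (D @ Tw (i - 1 + 1)) @ D'" by simp
  also have "\<dots> \<approx> D' @ (Tw (i - 1) @ D) @ D'" by (rule beq_ctx[OF bs[OF Tw_D]])
  also have "\<dots> = (D' @ Tw (i - 1)) @ (D @ D')" by simp
  also have "\<dots> \<approx> (D' @ Tw (i - 1)) @ []" by (rule beq_app[OF br DD'])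
  finally show ?thesis by simp
qed

lemma Tw_dp: "Tw i @ dp n \<approx> dp n @ Tw (i + n)"
proof (induction n rule: int_induct[where k = 0])
  case base then show ?case by (simp add: br)
next
  case (step1 k)
  have "Tw i @ dp (k + 1) \<approx> Tw i @ (dp k @ D)" by (rule beq_app[OF br bs[OF dp_sucR]])
  also have "\<dots> = (Tw i @ dp k) @ D" by simp
  also have "\<dots> \<approx> (dp k @ Tw (i + k)) @ D" by (rule beq_app[OF step1.IH br])
  also have "\<dots> = dp k @ (Tw (i + k) @ D)" by simp
  also have "\<dots> \<approx> dp k @ (D @ Tw (i + k + 1))" by (rule beq_app[OF br Tw_D])
  also have "\<dots> = (dp k @ D) @ Tw (i + (k + 1))" by (simp add: add.assoc)
  also have "\<dots> \<approx> dp (k + 1) @ Tw (i + (k + 1))" by (rule beq_app[OF dp_sucR br])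
  finally show ?case .
next
  case (step2 k)
  have "Tw i @ dp (k - 1) \<approx> Tw i @ (dp k @ D')" by (rule beq_app[OF br bs[OF dp_predR]])
  also have "\<dots> = (Tw i @ dp k) @ D'" by simp
  also have "\<dots> \<approx> (dp k @ Tw (i + k)) @ D'" by (rule beq_app[OF step2.IH br])
  also have "\<dots> = dp k @ (Tw (i + k) @ D')" by simp
  also have "\<dots> \<approx> dp k @ (D' @ Tw (i + k - 1))" by (rule beq_app[OF br Tw_D'])
  also have "\<dots> = (dp k @ D') @ Tw (i + (k - 1))" by (simp add: algebra_simps)
  also have "\<dots> \<approx> dp (k - 1) @ Tw (i + (k - 1))" by (rule beq_app[OF dp_predR br])
  finally show ?case .
qed

definition blk :: "int \<Rightarrow> nat \<Rightarrow> abword" where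
  "blk i u = concat (replicate u (Tw i))"

lemma blk_dp: "blk i u @ dp n \<approx> dp n @ blk (i + n) u"
proof (induction u)
  case 0 then show ?case by (simp add: blk_def br)
next
  case (Suc u)
  have "blk i (Suc u) @ dp n = Tw i @ (blk i u @ dp n)" by (simp add: blk_def)
  also have "\<dots> \<approx> Tw i @ (dp n @ blk (i + n) u)" by (rule beq_app[OF br Suc.IH])
  also have "\<dots> = (Tw i @ dp n) @ blk (i + n) u" by simp
  also have "\<dots> \<approx> (dp n @ Tw (i + n)) @ blk (i + n) u" by (rule beq_app[OF Tw_dp br])
  finally show ?case by (simp add: blk_def)
qed

lemma blk_cong: "i mod 3 = k mod 3 \<Longrightarrow> blk i u = blk k u"
  unfolding blk_def by (drule Tw_cong) simp

lemma blk_add: "blk i (a + b) = blk i a @ blk i b"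
  by (simp add: blk_def replicate_add)

fun Bs :: "int \<Rightarrow> nat list \<Rightarrow> abword" where
  "Bs j [] = []"
| "Bs j (u # us) = blk j u @ Bs (j + 1) us"

lemma Bs_dp: "Bs j us @ dp n \<approx> dp n @ Bs (j + n) us"
proof (induction us arbitrary: j)
  case Nil then show ?case by (simp add: br)
next
  case (Cons u us)
  have "Bs j (u # us) @ dp n = blk j u @ (Bs (j + 1) us @ dp n)" by simp
  also have "\<dots> \<approx> blk j u @ (dp n @ Bs (j + 1 + n) us)" by (rule beq_app[OF br Cons.IH])
  also have "\<dots> = (blk j u @ dp n) @ Bs (j + 1 + n) us" by simp
  also have "\<dots> \<approx> (dp n @ blk (j + n) u) @ Bs (j + 1 + n) us" by (rule beq_app[OF blk_dp br])
  finally show ?case by (simp add: algebra_simps)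
qed

lemma Bs_cong: "j mod 3 = k mod 3 \<Longrightarrow> Bs j us = Bs k us"
proof (induction us arbitrary: j k)
  case (Cons u us)
  have "(j + 1) mod 3 = (k + 1) mod 3" using Cons.prems by presburger
  then have "Bs (j + 1) us = Bs (k + 1) us" by (rule Cons.IH)
  moreover have "blk j u = blk k u" by (rule blk_cong[OF Cons.prems])
  ultimately show ?case by simp
qed simp

lemma Bs_append: "Bs j (p @ q) = Bs j p @ Bs (j + int (length p)) q"
  by (induction p arbitrary: j) (auto simp: algebra_simps)

lemma Bs_zero: "Bs j (0 # us) = Bs (j + 1) us" by (simp add: blk_def)

lemma Bs_zero_end: "Bs j (us @ [0]) = Bs j us" by (simp add: Bs_append blk_def)

lemma Bs_three: "Bs j (p @ [0, 0, 0] @ q) = Bs j (p @ q)"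
proof -
  let ?i = "j + int (length p)"
  have "(?i + 1 + 1 + 1) mod 3 = ?i mod 3" by presburger
  then have e: "Bs (?i + 1 + 1 + 1) q = Bs ?i q" by (rule Bs_cong)
  have "Bs j (p @ [0, 0, 0] @ q) = Bs j p @ Bs (?i + 1 + 1 + 1) q"
    by (simp add: Bs_append blk_def)
  also have "\<dots> = Bs j (p @ q)" using e by (simp add: Bs_append)
  finally show ?thesis .
qed

lemma Bs_merge: "Bs j (p @ [a, 0, 0, b] @ q) = Bs j (p @ [a + b] @ q)"
proof -
  let ?i = "j + int (length p)"
  have c1: "(?i + 1 + 1 + 1) mod 3 = ?i mod 3" by presburger
  have c2: "(?i + 1 + 1 + 1 + 1) mod 3 = (?i + 1) mod 3" by presburger
  have e1: "blk (?i + 1 + 1 + 1) b = blk ?i b" by (rule blk_cong[OF c1])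
  have e2: "Bs (?i + 1 + 1 + 1 + 1) q = Bs (?i + 1) q" by (rule Bs_cong[OF c2])
  have "Bs j (p @ [a, 0, 0, b] @ q) = Bs j p @ blk ?i a @ blk (?i + 1 + 1 + 1) b @ Bs (?i + 1 + 1 + 1 + 1) q"
    by (simp add: Bs_append blk_def)
  also have "\<dots> = Bs j (p @ [a + b] @ q)" using e1 e2 by (simp add: Bs_append blk_add)
  finally show ?thesis .
qed

lemma Tw_gap: "Tw i @ Tw (i + 2) \<approx> D"
proof -
  consider "i mod 3 = 1" | "i mod 3 = 2" | "i mod 3 = 0" using mod3_cases by blast
  then show ?thesis
  proof cases
    case 1
    then have "(i + 2) mod 3 = 0" by presburger
    then show ?thesis using 1 braid_eq.cancel[of "[]" GA True "[(GB,True),(GA,True)]"]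
      by (simp add: Tw_def tauI_def D_def)
  next
    case 2
    then have "(i + 2) mod 3 = 1" by presburger
    then show ?thesis using 2 by (simp add: Tw_def tauI_def D_def br)
  next
    case 3
    then have "(i + 2) mod 3 = 2" by presburger
    have a: "[(GA,False),(GB, True), (GA, True), (GB, True)] \<approx>
             [(GA,False),(GA, True), (GB, True), (GA, True)]"
      using bs[OF braid_eq.braid_rel[of "[(GA,False)]" "[]"]] by simp
    have b: "[(GA,False), (GA, True),(GB, True), (GA, True)] \<approx>
             [(GB, True), (GA, True)]"
      using braid_eq.cancel[of "[]" GA False "[(GB, True), (GA, True)]"] by simp
    show ?thesis using 3 \<open>(i + 2) mod 3 = 2\<close> bt[OF a b]
      by (simp add: Tw_def tauI_def D_def)
  qed
qed

definition Wd :: "int \<Rightarrow> int \<Rightarrow> nat list \<Rightarrow> abword" where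
  "Wd n j us = dp n @ Bs j us"

lemma Wd_gap:
  assumes "a \<ge> 1" "b \<ge> 1"
  shows "Wd n j (p @ [a, 0, b] @ q) \<approx> Wd (n + 1) (j + 1) (p @ [a - 1, b - 1] @ q)"
proof -
  let ?i = "j + int (length p)"
  have ea: "blk ?i a = blk ?i (a - 1) @ Tw ?i"
    using blk_add[of ?i "a - 1" 1] assms by (simp add: blk_def)
  have eb: "blk (?i + 1 + 1) b = Tw (?i + 2) @ blk (?i + 1 + 1) (b - 1)"
    using blk_add[of "?i + 1 + 1" 1 "b - 1"] assms by (simp add: blk_def add.assoc)
  let ?X = "Bs j p @ blk ?i (a - 1)"
  let ?Y = "blk (?i + 1 + 1) (b - 1) @ Bs (?i + 1 + 1 + 1) q"
  have "Wd n j (p @ [a, 0, b] @ q) = dp n @ ?X @ (Tw ?i @ Tw (?i + 2)) @ ?Y"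
    using ea eb by (simp add: Wd_def Bs_append blk_def)
  also have "\<dots> \<approx> dp n @ ?X @ D @ ?Y"
    by (intro beq_app br Tw_gap)
  also have "dp n @ ?X @ D @ ?Y = dp n @ (Bs j (p @ [a - 1]) @ dp 1) @ ?Y"
    by (simp add: Bs_append dp1)
  also have "\<dots> \<approx> dp n @ (dp 1 @ Bs (j + 1) (p @ [a - 1])) @ ?Y"
    by (intro beq_app br Bs_dp)
  also have "\<dots> = (dp n @ dp 1) @ Bs (j + 1) (p @ [a - 1]) @ ?Y" by simp
  also have "\<dots> \<approx> dp (n + 1) @ Bs (j + 1) (p @ [a - 1]) @ ?Y"
    by (intro beq_app br dp_add)
  also have "\<dots> = Wd (n + 1) (j + 1) (p @ [a - 1, b - 1] @ q)"
    by (simp add: Wd_def Bs_append algebra_simps)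
  finally show ?thesis .
qed

lemma bc_refl: "braid_conj u u"
  unfolding braid_conj_def by (rule exI[of _ "[]"]) (simp add: br)

lemma bc_beq: "braid_conj u v \<Longrightarrow> v \<approx> w \<Longrightarrow> braid_conj u w"
  unfolding braid_conj_def using bt by blast

lemma bc_of_beq: "u \<approx> v \<Longrightarrow> braid_conj u v"
  using bc_beq[OF bc_refl] .

lemma bc_sym: "braid_conj u v \<Longrightarrow> braid_conj v u"
proof -
  assume "braid_conj u v"
  then obtain g where g: "g @ u @ inv_word g \<approx> v" by (auto simp: braid_conj_def)
  have "inv_word g @ v @ g \<approx> inv_word g @ (g @ u @ inv_word g) @ g"
    by (intro beq_app br bs[OF g])
  also have "\<dots> = (inv_word g @ g) @ u @ (inv_word g @ g)" by simp
  also have "\<dots> \<approx> [] @ u @ []" by (intro beq_app br inv_cancel2)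
  finally have "inv_word g @ v @ inv_word (inv_word g) \<approx> u" by simp
  then show ?thesis unfolding braid_conj_def by blast
qed

lemma bc_trans: "braid_conj u v \<Longrightarrow> braid_conj v w \<Longrightarrow> braid_conj u w"
proof -
  assume "braid_conj u v" "braid_conj v w"
  then obtain g h where g: "g @ u @ inv_word g \<approx> v" and h: "h @ v @ inv_word h \<approx> w"
    by (auto simp: braid_conj_def)
  have "(h @ g) @ u @ inv_word (h @ g) = h @ (g @ u @ inv_word g) @ inv_word h" by simp
  also have "\<dots> \<approx> h @ v @ inv_word h" by (intro beq_app br g)
  finally have "(h @ g) @ u @ inv_word (h @ g) \<approx> w" using h bt by blast
  then show ?thesis unfolding braid_conj_def by blast
qed

lemma Wd_shift: "braid_conj (Wd n j us) (Wd n (j + 1) us)"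
proof -
  have "D' @ Wd n j us @ inv_word D' = (dp (-1) @ dp n) @ (Bs j us @ dp 1)"
    by (simp add: Wd_def D'_def dpm1 dp1)
  also have "\<dots> \<approx> dp (-1 + n) @ (dp 1 @ Bs (j + 1) us)"
    by (intro beq_app dp_add Bs_dp)
  also have "\<dots> \<approx> (dp n @ dp (-1)) @ (dp 1 @ Bs (j + 1) us)"
    by (intro beq_app br) (rule bs, use dp_add[of n "-1"] in simp)
  also have "\<dots> = dp n @ (dp (-1) @ dp 1) @ Bs (j + 1) us" by simp
  also have "\<dots> \<approx> dp n @ dp (-1 + 1) @ Bs (j + 1) us" by (intro beq_app br dp_add)
  also have "\<dots> = Wd n (j + 1) us" by (simp add: Wd_def)
  finally show ?thesis unfolding braid_conj_def by blast
qed

lemma Wd_cong: "j mod 3 = k mod 3 \<Longrightarrow> Wd n j us = Wd n k us"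
  unfolding Wd_def by (drule Bs_cong[of _ _ us]) simp

lemma Wd_to1: "braid_conj (Wd n j us) (Wd n 1 us)"
proof -
  have "\<And>m. braid_conj (Wd n j us) (Wd n (j + int m) us)"
  proof -
    fix m show "braid_conj (Wd n j us) (Wd n (j + int m) us)"
    proof (induction m)
      case 0 then show ?case by (simp add: bc_refl)
    next
      case (Suc m)
      then show ?case using bc_trans[OF Suc.IH Wd_shift[of n "j + int m" us]]
        by (simp add: algebra_simps)
    qed
  qed
  from this[of "nat ((1 - j) mod 3)"] have "braid_conj (Wd n j us) (Wd n (j + (1 - j) mod 3) us)"
    by simp
  moreover have "(j + (1 - j) mod 3) mod 3 = 1 mod 3" by presburger
  ultimately show ?thesis using Wd_cong by metis
qed

lemma Bs_zeros: "Bs j (replicate L 0 @ us) = Bs (j + int L) us"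
  by (induction L arbitrary: j) (auto simp: blk_def algebra_simps)

lemma Wd_rot:
  assumes "(int (length us) + n + 1 + int L) mod 3 = 0"
  shows "braid_conj (Wd n j (us @ [u])) (Wd n (j + int (length us) + n) (u # replicate L 0 @ us))"
proof -
  let ?i = "j + int (length us)"
  let ?g = "blk ?i u"
  have "?g @ Wd n j (us @ [u]) @ inv_word ?g = (?g @ dp n) @ Bs j us @ (?g @ inv_word ?g)"
    by (simp add: Wd_def Bs_append)
  also have "\<dots> \<approx> (dp n @ blk (?i + n) u) @ Bs j us @ []"
    by (intro beq_app br blk_dp inv_cancel)
  also have "\<dots> = Wd n (?i + n) (u # replicate L 0 @ us)"
  proof -
    have "(?i + n + 1 + int L) mod 3 = j mod 3" using assms by presburger
    then have "Bs (?i + n + 1 + int L) us = Bs j us" by (rule Bs_cong)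
    then show ?thesis by (simp add: Wd_def Bs_zeros)
  qed
  finally show ?thesis unfolding braid_conj_def by blast
qed

lemma Wd_zero: "Wd n j (0 # us) = Wd n (j + 1) us" by (simp add: Wd_def blk_def)
lemma Wd_zero_end: "Wd n j (us @ [0]) = Wd n j us" by (simp add: Wd_def Bs_zero_end)
lemma Wd_three: "Wd n j (p @ [0, 0, 0] @ q) = Wd n j (p @ q)" by (simp only: Wd_def Bs_three)
lemma Wd_merge: "Wd n j (p @ [a, 0, 0, b] @ q) = Wd n j (p @ [a + b] @ q)"
  by (simp only: Wd_def Bs_merge)

lemma xu_eval_append: "xu_eval (u @ v) = xu_eval u @ xu_eval v"
  by (simp add: xu_eval_def)

lemma xu_eval_dp: "xu_eval (replicate (nat \<bar>n\<bar>) (Ld, n \<ge> 0)) = dp n"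
  by (simp add: xu_eval_def dp_def D_def D'_def map_replicate)

lemma tau_Tw: "xu_val (tau (Suc m)) = Tw (1 + int m)"
proof -
  have "int (Suc m mod 3) = (1 + int m) mod 3" by (simp add: zmod_int)
  then show ?thesis by (auto simp: tau_def Tw_def tauI_def)
qed

lemma xu_eval_blocks: "xu_eval (concat (map (\<lambda>i. replicate (us ! i) (tau (Suc (i + m)), True)) [0..<length us]))
   = Bs (1 + int m) us"
proof (induction us arbitrary: m)
  case Nil then show ?case by (simp add: xu_eval_def)
next
  case (Cons u us)
  let ?F = "\<lambda>i. replicate ((u # us) ! i) (tau (Suc (i + m)), True)"
  have m: "map ?F [0..<Suc (length us)] = ?F 0 # map (?F \<circ> Suc) [0..<length us]"
    by (simp add: upt_conv_Cons map_Suc_upt[symmetric] del: upt_Suc)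
  have f: "(?F \<circ> Suc) = (\<lambda>i. replicate (us ! i) (tau (Suc (i + Suc m)), True))"
    by (rule ext) simp
  have "concat (map ?F [0..<length (u # us)])
     = replicate u (tau (Suc m), True) @ concat (map (\<lambda>i. replicate (us ! i) (tau (Suc (i + Suc m)), True)) [0..<length us])"
    unfolding length_Cons m f by simp
  then show ?case using Cons.IH[of "Suc m"]
    by (simp add: xu_eval_append xu_eval_def map_replicate blk_def tau_Tw algebra_simps)
qed

lemma xu_Wd: "xu_eval (xu_word n us) = Wd n 1 us"
  using xu_eval_blocks[of us 0] by (simp add: xu_word_def xu_eval_append xu_eval_dp Wd_def)




lemma Wd_norm: "\<exists>n' j' us'. Wd n j us \<approx> Wd n' j' us' \<and> n \<le> n' \<and> (\<forall>x\<in>set us'. x \<ge> 1)"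
proof (induction "sum_list us + length us" arbitrary: n j us rule: less_induct)
  case less
  show ?case
  proof (cases "\<forall>x\<in>set us. x \<ge> 1")
    case True then show ?thesis by (intro exI conjI) (auto intro: br)
  next
    case False
    then obtain x0 where "x0 \<in> set us" "x0 = 0" by (auto simp: not_le)
    then have z: "0 \<in> set us" by simp
    show ?thesis
    proof (cases "hd us = 0")
      case True
      then obtain r where us: "us = 0 # r" using z by (cases us) auto
      then have "sum_list r + length r < sum_list us + length us" by simp
      from less[OF this, of n "j + 1"] show ?thesis unfolding us Wd_zero .
    next
      case hd: False
      show ?thesis
      proof (cases "last us = 0")
        case True
        have "us \<noteq> []" using z by auto
        then have "us = butlast us @ [last us]" by simp
        then obtain r where us: "us = r @ [0]" using True by auto
        then have "sum_list r + length r < sum_list us + length us" by simp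
        from less[OF this, of n j] show ?thesis unfolding us Wd_zero_end .
      next
        case lst: False
        obtain p q where pq: "us = p @ 0 # q" "0 \<notin> set p" using split_list_first[OF z] by blast
        have "p \<noteq> []" using hd pq by auto
        then obtain p' a where p: "p = p' @ [a]" by (cases p rule: rev_cases) auto
        have "a \<noteq> 0" using pq p by auto
        then have a: "a \<ge> 1" by simp
        have "q \<noteq> []" using lst pq by auto
        then obtain b q' where q: "q = b # q'" by (cases q) auto
        show ?thesis
        proof (cases "b \<ge> 1")
          case True
          have us: "us = p' @ [a, 0, b] @ q'" using pq p q by simp
          have "sum_list (p' @ [a - 1, b - 1] @ q') + length (p' @ [a - 1, b - 1] @ q') <
                sum_list us + length us" using us a True by simp
          from less[OF this, of "n + 1" "j + 1"] obtain n' j' us' where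
            h: "Wd (n + 1) (j + 1) (p' @ [a - 1, b - 1] @ q') \<approx> Wd n' j' us'" "n + 1 \<le> n'"
               "\<forall>x\<in>set us'. x \<ge> 1" by blast
          show ?thesis using bt[OF Wd_gap[OF a True, of n j p' q'] h(1)] h(2,3) us
            by (intro exI[of _ n'] exI[of _ j'] exI[of _ us']) auto
        next
          case False
          then have b: "b = 0" by simp
          have "q' \<noteq> []" using lst pq q b by auto
          then obtain c q'' where q': "q' = c # q''" by (cases q') auto
          show ?thesis
          proof (cases "c \<ge> 1")
            case True
            have us: "us = p' @ [a, 0, 0, c] @ q''" using pq p q q' b by simp
            have "sum_list (p' @ [a + c] @ q'') + length (p' @ [a + c] @ q'') <
                sum_list us + length us" using us by simp
            from less[OF this, of n j] show ?thesis unfolding us Wd_merge .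
          next
            case False
            have us: "us = (p' @ [a]) @ [0, 0, 0] @ q''" using pq p q q' b False by simp
            have "sum_list ((p' @ [a]) @ q'') + length ((p' @ [a]) @ q'') <
                sum_list us + length us" using us by simp
            from less[OF this, of n j] show ?thesis unfolding us Wd_three .
          qed
        qed
      qed
    qed
  qed
qed





declare eqv_trans[trans]

definition sp :: "int \<Rightarrow> fl list" where
  "sp n = (if n mod 3 = 0 then [] else if n mod 3 = 1 then [Sp] else [Sm])"

lemma mod3_cases': "(i::int) mod 3 = 0 \<or> i mod 3 = 1 \<or> i mod 3 = 2" by presburger

lemma sp_cong: "a mod 3 = b mod 3 \<Longrightarrow> sp a = sp b" by (simp add: sp_def)

lemma rd_sp: "rd (sp n)" by (simp add: sp_def)

lemma red_sp2_aux: "x \<in> {0, 1, 2} \<Longrightarrow> y \<in> {0, 1, 2} \<Longrightarrow> red (sp x @ sp y) = sp (x + y)"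
  by (auto simp: sp_def red_def)

lemma red_sp2: "red (sp a @ sp b) = sp (a + b)"
proof -
  have a: "sp a = sp (a mod 3)" "sp b = sp (b mod 3)" by (rule sp_cong, simp)+
  have c: "sp (a + b) = sp (a mod 3 + b mod 3)" by (rule sp_cong) presburger
  have "a mod 3 = 0 \<or> a mod 3 = 1 \<or> a mod 3 = 2" "b mod 3 = 0 \<or> b mod 3 = 1 \<or> b mod 3 = 2"
    by presburger+
  then have "a mod 3 \<in> {0, 1, 2}" "b mod 3 \<in> {0, 1, 2}" by auto
  then show ?thesis unfolding a c by (rule red_sp2_aux)
qed

lemma eqv_sp2: "eqv (sp a @ sp b) (sp (a + b))"
  unfolding eqv_def red_sp2 using red_rd[OF rd_sp] by simp

lemma sp0[simp]: "sp 0 = []" by (simp add: sp_def)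
lemma spm1: "sp (-1) = [Sm]" by (simp add: sp_def)

lemma red_Phi_dp: "red (Phi (dp n)) = sp n"
proof (induction n rule: int_induct[where k = 0])
  case base then show ?case by (simp add: red_def)
next
  case (step1 i)
  have "red (Phi (dp (i + 1))) = red (Phi (dp i) @ Phi D)"
    using step1 by (simp add: dp_pos)
  also have "\<dots> = red (red (Phi (dp i)) @ red (Phi D))" by (rule red_app2)
  also have "red (Phi D) = sp 1" by (simp add: D_def Phi_def red_def sp_def)
  finally show ?case using step1 red_sp2 by simp
next
  case (step2 i)
  show ?case
  proof (cases "i - 1 < 0")
    case True
    have "red (Phi (dp (i - 1))) = red (Phi (dp i) @ Phi D')"
      using dp_neg[OF True] by simp
    also have "\<dots> = red (red (Phi (dp i)) @ red (Phi D'))" by (rule red_app2)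
    also have "red (Phi D') = sp (-1)"
      by (simp add: D'_def D_def Phi_def red_def sp_def inv_word_def)
    finally show ?thesis using step2 red_sp2[of i "-1"] by simp
  next
    case False
    then show ?thesis using step2 by simp
  qed
qed

lemma eqv_Phi_dp: "eqv (Phi (dp n)) (sp n)"
  unfolding eqv_def red_Phi_dp using red_rd[OF rd_sp] by simp

definition rS :: "nat \<Rightarrow> fl list" where "rS u = concat (replicate u [R, Sm])"

lemma eqv_Tw: "eqv (Phi (Tw i)) (sp (1 - i) @ [R, Sm] @ sp (i - 1))"
proof -
  consider "i mod 3 = 1" | "i mod 3 = 2" | "i mod 3 = 0" using mod3_cases' by blast
  then show ?thesis
  proof cases
    case 1
    then have "(1 - i) mod 3 = 0" "(i - 1) mod 3 = 0" by presburger+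
    then show ?thesis using 1 by (simp add: Tw_def tauI_def sp_def Phi_def)
  next
    case 2
    then have "(1 - i) mod 3 = 2" "(i - 1) mod 3 = 1" by presburger+
    then show ?thesis using 2 by (simp add: Tw_def tauI_def sp_def Phi_def eqv_def red_def)
  next
    case 3
    then have "(1 - i) mod 3 = 1" "(i - 1) mod 3 = 2" by presburger+
    then show ?thesis using 3 by (simp add: Tw_def tauI_def sp_def Phi_def eqv_def red_def)
  qed
qed

lemma eqv_cancel_sp: "eqv (sp (i - 1) @ sp (1 - i)) []"
  using eqv_sp2[of "i - 1" "1 - i"] by simp

lemma eqv_blk: "eqv (Phi (blk i u)) (sp (1 - i) @ rS u @ sp (i - 1))"
proof (induction u)
  case 0
  have "eqv [] (sp (1 - i) @ sp (i - 1))" using eqv_sym[OF eqv_sp2[of "1 - i" "i - 1"]] by simp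
  then show ?case by (simp add: blk_def rS_def)
next
  case (Suc u)
  have "Phi (blk i (Suc u)) = Phi (Tw i) @ Phi (blk i u)" by (simp add: blk_def)
  also have "eqv \<dots> ((sp (1 - i) @ [R, Sm] @ sp (i - 1)) @ (sp (1 - i) @ rS u @ sp (i - 1)))"
    by (intro eqv_app eqv_Tw Suc.IH)
  also have "\<dots> = (sp (1 - i) @ [R, Sm]) @ (sp (i - 1) @ sp (1 - i)) @ (rS u @ sp (i - 1))" by simp
  also have "eqv \<dots> ((sp (1 - i) @ [R, Sm]) @ [] @ (rS u @ sp (i - 1)))"
    by (intro eqv_app eqv_refl eqv_cancel_sp)
  finally show ?case by (simp add: rS_def)
qed

definition Z :: "nat list \<Rightarrow> fl list" where
  "Z us = concat (map (\<lambda>u. rS u @ [Sm]) us)"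

lemma eqv_Bs: "eqv (Phi (Bs j us)) (sp (1 - j) @ Z us @ sp (j - 1 + int (length us)))"
proof (induction us arbitrary: j)
  case Nil
  have "eqv [] (sp (1 - j) @ sp (j - 1))" using eqv_sym[OF eqv_sp2[of "1 - j" "j - 1"]] by simp
  then show ?case by (simp add: Z_def)
next
  case (Cons u us)
  have "Phi (Bs j (u # us)) = Phi (blk j u) @ Phi (Bs (j + 1) us)" by simp
  also have "eqv \<dots> ((sp (1 - j) @ rS u @ sp (j - 1)) @ (sp (1 - (j + 1)) @ Z us @ sp (j + 1 - 1 + int (length us))))"
    by (intro eqv_app eqv_blk Cons.IH)
  also have "\<dots> = (sp (1 - j) @ rS u) @ (sp (j - 1) @ sp (1 - (j + 1))) @ (Z us @ sp (j + 1 - 1 + int (length us)))"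
    by simp
  also have "eqv \<dots> ((sp (1 - j) @ rS u) @ sp (-1) @ (Z us @ sp (j + 1 - 1 + int (length us))))"
    by (intro eqv_app eqv_refl) (use eqv_sp2[of "j - 1" "1 - (j + 1)"] in simp)
  finally show ?case by (simp add: Z_def spm1 algebra_simps)
qed

lemma eqv_Wd: "eqv (Phi (Wd n 1 us)) (sp n @ Z us @ sp (int (length us)))"
proof -
  have "Phi (Wd n 1 us) = Phi (dp n) @ Phi (Bs 1 us)" by (simp add: Wd_def)
  also have "eqv \<dots> (sp n @ (sp (1 - 1) @ Z us @ sp (1 - 1 + int (length us))))"
    by (intro eqv_app eqv_Phi_dp eqv_Bs)
  finally show ?thesis by simp
qed




definition B0 :: "nat \<Rightarrow> fl list" where "B0 u = rS (u - 1) @ [R, Sp]"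
definition P0 :: "nat list \<Rightarrow> fl list" where "P0 us = concat (map B0 us)"
definition P1 :: "nat list \<Rightarrow> fl list" where "P1 us = butlast (P0 us) @ [Sm]"
abbreviation cntR :: "fl list \<Rightarrow> nat" where "cntR w \<equiv> count_list w R"
abbreviation cntS :: "fl list \<Rightarrow> nat" where "cntS w \<equiv> count_list w Sp"

lemma rd_append: "rd x \<Longrightarrow> rd y \<Longrightarrow> (x \<noteq> [] \<Longrightarrow> y \<noteq> [] \<Longrightarrow> comb (last x) (hd y) = None) \<Longrightarrow> rd (x @ y)"
proof (induction x rule: rd.induct)
  case 1 then show ?case by simp
next
  case (2 c) then show ?case by (cases y) auto
next
  case (3 c d w) then show ?case by auto
qed

lemma rS_Suc: "rS (Suc k) = [R, Sm] @ rS k" by (simp add: rS_def)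
lemma rS_Suc': "rS (Suc k) = rS k @ [R, Sm]" by (simp add: rS_def replicate_append_same[symmetric])

lemma rS_0[simp]: "rS 0 = []" by (simp add: rS_def)

lemma hd_rS: "hd (rS k @ R # xs) = R"
  by (cases k) (auto simp: rS_Suc)

lemma rd_rS: "rd (rS k @ [R, Sp])"
proof (induction k)
  case (Suc k)
  have "rS (Suc k) @ [R, Sp] = R # Sm # (rS k @ [R, Sp])" by (simp add: rS_Suc)
  then show ?case using Suc hd_rS[of k "[Sp]"] by (cases "rS k @ [R, Sp]") auto
qed simp

lemma cnt_rS[simp]: "cntR (rS k) = k" "cntS (rS k) = 0"
  by (induction k) (auto simp: rS_Suc)

lemma P0_Nil[simp]: "P0 [] = []" by (simp add: P0_def)
lemma P0_Cons: "P0 (u # us) = B0 u @ P0 us" by (simp add: P0_def)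
lemma P0_append: "P0 (xs @ ys) = P0 xs @ P0 ys" by (simp add: P0_def)

lemma hd_P0: "us \<noteq> [] \<Longrightarrow> hd (P0 us) = R"
  by (cases us) (auto simp: P0_Cons B0_def hd_rS)

lemma hd_P0': "P0 us \<noteq> [] \<Longrightarrow> hd (P0 us) = R"
  using hd_P0 by (cases us) auto

lemma rd_P0: "rd (P0 us)"
proof (induction us)
  case Nil then show ?case by simp
next
  case (Cons u us)
  show ?case unfolding P0_Cons
    by (rule rd_append) (auto simp: B0_def rd_rS Cons.IH hd_P0')
qed

lemma cnt_P0: "\<forall>x\<in>set us. x \<ge> 1 \<Longrightarrow> cntR (P0 us) = sum_list us"
  by (induction us) (auto simp: P0_Cons B0_def)

lemma cntS_P0: "cntS (P0 us) = length us"
  by (induction us) (auto simp: P0_Cons B0_def)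

lemma eqv_B0: "u \<ge> 1 \<Longrightarrow> eqv (rS u @ [Sm]) (B0 u)"
proof -
  assume "u \<ge> 1"
  then obtain k where u: "u = Suc k" by (cases u) auto
  have "rS u @ [Sm] = rS k @ [R, Sm, Sm]" by (simp add: u rS_Suc')
  also have "eqv \<dots> (rS k @ [R, Sp])"
    by (intro eqv_app eqv_refl) (simp add: eqv_def red_def)
  finally show ?thesis by (simp add: B0_def u)
qed

lemma eqv_Z: "\<forall>x\<in>set us. x \<ge> 1 \<Longrightarrow> eqv (Z us) (P0 us)"
proof (induction us)
  case Nil then show ?case by (simp add: Z_def)
next
  case (Cons u us)
  have "Z (u # us) = (rS u @ [Sm]) @ Z us" by (simp add: Z_def)
  also have "eqv \<dots> (B0 u @ P0 us)" using Cons by (intro eqv_app eqv_B0) auto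
  finally show ?case by (simp add: P0_Cons)
qed

lemma P0_snoc: "us \<noteq> [] \<Longrightarrow> P0 us = (P0 (butlast us) @ rS (last us - 1)) @ [R, Sp]"
proof -
  assume "us \<noteq> []"
  then have "us = butlast us @ [last us]" by simp
  then have "P0 us = P0 (butlast us) @ P0 [last us]" by (metis P0_append)
  then show ?thesis by (simp add: P0_def B0_def)
qed

lemma invl_sp: "invl (sp t) = sp (- t)"
proof -
  consider "t mod 3 = 0" | "t mod 3 = 1" | "t mod 3 = 2" using mod3_cases' by blast
  then show ?thesis
  proof cases
    case 1 then have "(-t) mod 3 = 0" by presburger
    then show ?thesis using 1 by (simp add: sp_def invl_def)
  next
    case 2 then have "(-t) mod 3 = 2" by presburger
    then show ?thesis using 2 by (simp add: sp_def invl_def)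
  next
    case 3 then have "(-t) mod 3 = 1" by presburger
    then show ?thesis using 3 by (simp add: sp_def invl_def)
  qed
qed

lemma cyc_cntR: "cntR (cyc w) \<le> cntR w"
proof (induction w rule: cyc.induct)
  case (1 w)
  show ?case
  proof (cases "length w \<le> 1")
    case True then show ?thesis by simp
  next
    case False
    show ?thesis
    proof (cases "comb (last w) (hd w)")
      case None then show ?thesis using False by (subst cyc.simps) simp
    next
      case (Some f)
      have fR: "count_list f R = 0"
        using Some by (cases "last w"; cases "hd w"; auto)
      have "w = hd w # tl w" using False by (cases w) auto
      have bl: "\<And>xs. count_list (butlast xs) R \<le> count_list xs R"
      proof -
        fix xs :: "fl list" show "count_list (butlast xs) R \<le> count_list xs R"
          by (induction xs) auto
      qed
      have "count_list (butlast (tl w)) R \<le> count_list (tl w) R" by (rule bl)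
      also have "\<dots> \<le> count_list w R" by (cases w) auto
      finally have "cntR (f @ butlast (tl w)) \<le> cntR w" using fR by simp
      then show ?thesis using 1[OF False Some] False Some by (subst cyc.simps) simp
    qed
  qed
qed

lemma count_rotate: "count_list (rotate k xs) x = count_list xs x"
proof -
  let ?m = "k mod length xs"
  have "count_list xs x = count_list (take ?m xs @ drop ?m xs) x" by simp
  also have "\<dots> = count_list (drop ?m xs @ take ?m xs) x" by (simp only: count_list_append add.commute)
  finally show ?thesis by (simp only: rotate_drop_take)
qed

lemma rot_count: "rot X Y \<Longrightarrow> count_list X x = count_list Y x"
  unfolding rot_def using count_rotate by auto




lemma rd_ConsI: "rd X \<Longrightarrow> X \<noteq> [] \<Longrightarrow> comb c (hd X) = None \<Longrightarrow> rd (c # X)"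
  by (cases X) auto

lemma red_Wd_conj:
  assumes pos: "\<forall>x\<in>set us. x \<ge> 1"
  shows "rot (cyc (red (Phi (Wd n 1 us)))) (cyc (red (sp (n + int (length us)) @ P0 us)))"
proof -
  let ?t = "int (length us)"
  let ?W = "red (Phi (Wd n 1 us))"
  have c: "rot (cyc (red (sp ?t @ ?W @ invl (sp ?t)))) (cyc ?W)"
    by (rule conjG[OF rd_red])
  have "sp ?t @ ?W @ invl (sp ?t) = sp ?t @ red (Phi (Wd n 1 us)) @ sp (- ?t)"
    by (simp add: invl_sp)
  also have "eqv \<dots> (sp ?t @ (sp n @ Z us @ sp ?t) @ sp (- ?t))"
  proof -
    have "eqv (red (Phi (Wd n 1 us))) (sp n @ Z us @ sp ?t)"
      using eqv_trans[OF eqv_sym[OF eqv_red] eqv_Wd] .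
    then show ?thesis by (intro eqv_app eqv_refl)
  qed
  also have "\<dots> = (sp ?t @ sp n) @ Z us @ (sp ?t @ sp (- ?t))" by simp
  also have "eqv \<dots> (sp (?t + n) @ P0 us @ sp (?t + - ?t))"
    by (intro eqv_app eqv_sp2 eqv_Z pos)
  finally have "red (sp ?t @ ?W @ invl (sp ?t)) = red (sp (n + ?t) @ P0 us)"
    by (simp add: eqv_def add.commute)
  then show ?thesis using rot_sym[OF c] by simp
qed

lemma shape:
  assumes pos: "\<forall>x\<in>set us. x \<ge> 1"
  shows "\<exists>C0. rot (cyc (red (Phi (Wd n 1 us)))) C0 \<and>
     (us = [] \<longrightarrow> cntR C0 = 0) \<and>
     (us \<noteq> [] \<and> (n + int (length us)) mod 3 = 0 \<longrightarrow> C0 = P0 us) \<and>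
     (us \<noteq> [] \<and> (n + int (length us)) mod 3 = 1 \<longrightarrow> C0 = P1 us) \<and>
     (us \<noteq> [] \<and> (n + int (length us)) mod 3 = 2 \<longrightarrow>
         (sum_list us = 1 \<and> cntR C0 = 1) \<or> (sum_list us \<ge> 2 \<and> cntR C0 + 2 \<le> sum_list us))"
proof -
  let ?m = "n + int (length us)"
  note base = red_Wd_conj[OF pos, of n]
  show ?thesis
  proof (cases "us = []")
    case True
    let ?C = "cyc (red (sp n))"
    have "cntR (red (sp n)) = 0" using red_rd[OF rd_sp] by (simp add: sp_def)
    then have "cntR ?C = 0" using cyc_cntR[of "red (sp n)"] by simp
    then show ?thesis using base True by (intro exI[of _ ?C]) simp
  next
    case ne: False
    define Y where "Y = P0 (butlast us) @ rS (last us - 1)"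
    have P0: "P0 us = Y @ [R, Sp]" using P0_snoc[OF ne] by (simp add: Y_def)
    have cY: "cntR Y + 1 = sum_list us" using cnt_P0[OF pos] P0 by simp
    have rdP: "rd (P0 us)" by (rule rd_P0)
    have hdYR: "hd (Y @ [R, Sp]) = R" using hd_P0[OF ne] P0 by simp
    consider "?m mod 3 = 0" | "?m mod 3 = 1" | "?m mod 3 = 2" using mod3_cases' by blast
    then show ?thesis
    proof cases
      case 1
      then have "sp ?m = []" by (simp add: sp_def)
      have "cyc (Y @ [R, Sp]) = Y @ [R, Sp]" by (rule cyc_stop) (simp_all add: hdYR)
      then have "cyc (red (sp ?m @ P0 us)) = P0 us"
        using red_rd[OF rdP] \<open>sp ?m = []\<close> by (simp add: P0)
      then show ?thesis using base 1 ne by (intro exI[of _ "P0 us"]) simp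
    next
      case 2
      then have "sp ?m = [Sp]" by (simp add: sp_def)
      moreover have "rd (Sp # P0 us)" using rdP hd_P0[OF ne] P0
        by (intro rd_ConsI) auto
      ultimately have "cyc (red (sp ?m @ P0 us)) = Sm # Y @ [R]"
        using red_rd by (simp add: P0 cyc_step cyc_stop butlast_append)
      moreover have "rot (Sm # Y @ [R]) (P1 us)" by (simp add: P1_def P0 butlast_append rots)
      ultimately show ?thesis using base 2 ne rot_trans by (intro exI[of _ "P1 us"]) auto
    next
      case 3
      then have "sp ?m = [Sm]" by (simp add: sp_def)
      moreover have "rd (Sm # P0 us)" using rdP hd_P0[OF ne] P0
        by (intro rd_ConsI) auto
      ultimately have cc: "cyc (red (sp ?m @ P0 us)) = cyc (Y @ [R])"
        using red_rd by (simp add: P0 cyc_step butlast_append)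
      show ?thesis
      proof (cases "Y = []")
        case True
        then show ?thesis using base 3 ne cc cY by (intro exI[of _ "[R]"]) simp
      next
        case Yne: False
        have "hd Y = R"
        proof (cases "butlast us = []")
          case True
          then have "last us \<ge> 1" using pos ne by simp
          then show ?thesis using True Yne unfolding Y_def by (cases "last us - 1") (auto simp: rS_Suc)
        next
          case False
          have "P0 (butlast us) \<noteq> []" using P0_snoc[OF False] by simp
          then show ?thesis unfolding Y_def using hd_P0[OF False] by (simp add: hd_append)
        qed
        then obtain M where Y: "Y = R # M" using Yne by (cases Y) auto
        have "cyc (Y @ [R]) = cyc M" by (simp add: Y cyc_step)
        moreover have "cntR (cyc M) \<le> cntR M" by (rule cyc_cntR)
        moreover have "cntR M + 2 = sum_list us" using cY Y by simp
        ultimately show ?thesis using base 3 ne cc by (intro exI[of _ "cyc M"]) auto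
      qed
    qed
  qed
qed




lemma set_rS: "Sp \<notin> set (rS k)" by (induction k) (auto simp: rS_Suc)

lemma len_rS[simp]: "length (rS k) = 2 * k" by (induction k) (auto simp: rS_Suc)

lemma len_B0: "length (B0 a) = 2 * a" if "a \<ge> 1" using that by (simp add: B0_def)

lemma butlast_B0: "butlast (B0 a) = rS (a - 1) @ [R]" by (simp add: B0_def butlast_append)

lemma B0_last: "a \<ge> 1 \<Longrightarrow> B0 a ! (2 * a - 1) = Sp"
proof -
  assume "a \<ge> 1"
  have "B0 a ! (2 * (a - 1) + 1) = Sp" by (simp add: B0_def nth_append)
  moreover have "2 * a - 1 = 2 * (a - 1) + 1" using \<open>a \<ge> 1\<close> by simp
  ultimately show ?thesis by metis
qed

lemma B0_nth: "a \<ge> 1 \<Longrightarrow> i < 2 * a - 1 \<Longrightarrow> B0 a ! i \<noteq> Sp"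
proof -
  assume a: "a \<ge> 1" "i < 2 * a - 1"
  then have "B0 a ! i = butlast (B0 a) ! i" by (simp add: nth_butlast len_B0)
  moreover have "butlast (B0 a) ! i \<in> set (butlast (B0 a))" using a by (simp add: len_B0)
  ultimately show ?thesis using set_rS by (auto simp: butlast_B0)
qed

lemma B0_ne: "B0 a \<noteq> []" by (simp add: B0_def)

lemma P0_inj: "\<forall>x\<in>set u. x \<ge> 1 \<Longrightarrow> \<forall>x\<in>set v. x \<ge> 1 \<Longrightarrow> P0 u = P0 v \<Longrightarrow> u = v"
proof (induction u arbitrary: v)
  case Nil then show ?case by (cases v) (auto simp: P0_Cons B0_ne)
next
  case (Cons a u)
  then obtain b v' where v: "v = b # v'" by (cases v) (auto simp: P0_Cons B0_ne)
  have a: "a \<ge> 1" and b: "b \<ge> 1" using Cons.prems v by auto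
  have eq: "B0 a @ P0 u = B0 b @ P0 v'" using Cons.prems v by (simp add: P0_Cons)
  have ab: "a = b"
  proof (rule ccontr)
    assume "a \<noteq> b"
    then consider "a < b" | "b < a" by linarith
    then show False
    proof cases
      case 1
      have "(B0 a @ P0 u) ! (2 * a - 1) = Sp" using a B0_last[OF a] len_B0[OF a] by (simp add: nth_append)
      moreover have "(B0 b @ P0 v') ! (2 * a - 1) \<noteq> Sp"
      proof -
        have i: "2 * a - 1 < 2 * b - 1" using a 1 by simp
        then have l: "2 * a - 1 < length (B0 b)" using len_B0[OF b] by linarith
        then have "(B0 b @ P0 v') ! (2 * a - 1) = B0 b ! (2 * a - 1)"
          by (simp only: nth_append if_True)
        then show ?thesis using B0_nth[OF b i] by simp
      qed
      ultimately show False using eq by simp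
    next
      case 2
      have "(B0 b @ P0 v') ! (2 * b - 1) = Sp" using b B0_last[OF b] len_B0[OF b] by (simp add: nth_append)
      moreover have "(B0 a @ P0 u) ! (2 * b - 1) \<noteq> Sp"
      proof -
        have i: "2 * b - 1 < 2 * a - 1" using b 2 by simp
        then have l: "2 * b - 1 < length (B0 a)" using len_B0[OF a] by linarith
        then have "(B0 a @ P0 u) ! (2 * b - 1) = B0 a ! (2 * b - 1)"
          by (simp only: nth_append if_True)
        then show ?thesis using B0_nth[OF a i] by simp
      qed
      ultimately show False using eq by simp
    qed
  qed
  then have "P0 u = P0 v'" using eq by simp
  then have "u = v'" using Cons v by auto
  then show ?case using ab v by simp
qed

lemma P0_boundary:
  "\<forall>x\<in>set u. x \<ge> 1 \<Longrightarrow> k \<le> length (P0 u) \<Longrightarrow> (k = 0 \<or> last (take k (P0 u)) = Sp) \<Longrightarrow>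
   \<exists>j. take k (P0 u) = P0 (take j u) \<and> drop k (P0 u) = P0 (drop j u)"
proof (induction u arbitrary: k)
  case Nil then show ?case by simp
next
  case (Cons a u)
  have a: "a \<ge> 1" using Cons.prems by simp
  have L: "length (B0 a) = 2 * a" using a by (simp add: len_B0)
  show ?case
  proof (cases "k = 0")
    case True then show ?thesis by (intro exI[of _ 0]) simp
  next
    case k0: False
    show ?thesis
    proof (cases "k \<ge> 2 * a")
      case True
      let ?k = "k - 2 * a"
      have "?k \<le> length (P0 u)" using Cons.prems(2) L by (simp add: P0_Cons)
      moreover have "?k = 0 \<or> last (take ?k (P0 u)) = Sp"
      proof (cases "?k = 0")
        case False
        have "P0 u \<noteq> []" using False \<open>?k \<le> length (P0 u)\<close> by auto
        have "take k (P0 (a # u)) = B0 a @ take ?k (P0 u)" using True L by (simp add: P0_Cons)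
        then show ?thesis using Cons.prems(3) k0 False \<open>?k \<le> length (P0 u)\<close> \<open>P0 u \<noteq> []\<close>
          by (simp add: last_append)
      qed simp
      ultimately have "\<exists>j. take ?k (P0 u) = P0 (take j u) \<and> drop ?k (P0 u) = P0 (drop j u)"
        using Cons.IH[of ?k] Cons.prems(1) by simp
      then obtain j where j: "take ?k (P0 u) = P0 (take j u)" "drop ?k (P0 u) = P0 (drop j u)"
        by blast
      show ?thesis
        using j True L by (intro exI[of _ "Suc j"]) (simp add: P0_Cons)
    next
      case False
      then have kl: "k - 1 < 2 * a - 1" "k \<le> length (B0 a)" using k0 L by auto
      have "take k (P0 (a # u)) = take k (B0 a)" using kl by (simp add: P0_Cons)
      moreover have "last (take k (B0 a)) = B0 a ! (k - 1)"
      proof -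
        have "take k (B0 a) \<noteq> []" using k0 B0_ne by simp
        moreover have "length (take k (B0 a)) = k" using kl by simp
        ultimately have "last (take k (B0 a)) = take k (B0 a) ! (k - 1)" by (simp add: last_conv_nth)
        also have "\<dots> = B0 a ! (k - 1)" using k0 by simp
        finally show ?thesis .
      qed
      ultimately have "last (take k (P0 (a # u))) = B0 a ! (k - 1)" by simp
      then show ?thesis using Cons.prems(3) k0 B0_nth[OF a kl(1)] by simp
    qed
  qed
qed

lemma P0_rot:
  assumes pu: "\<forall>x\<in>set u. x \<ge> 1" and pv: "\<forall>x\<in>set v. x \<ge> 1" and ne: "u \<noteq> []"
    and r: "rot (P0 v) (P0 u)"
  shows "\<exists>j. v = rotate j u"
proof -
  obtain k where k: "P0 v = rotate k (P0 u)" using r by (auto simp: rot_def)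
  let ?X = "P0 u"
  let ?m = "k mod length ?X"
  have Xne: "?X \<noteq> []" using ne P0_snoc[OF ne] by simp
  then have mlt: "?m < length ?X" by simp
  have v1: "P0 v = drop ?m ?X @ take ?m ?X" using k by (simp add: rotate_drop_take)
  have vne: "v \<noteq> []" using v1 Xne mlt by auto
  show ?thesis
  proof (cases "?m = 0")
    case True
    then have "P0 v = P0 u" using v1 by simp
    then show ?thesis using P0_inj[OF pv pu] by (intro exI[of _ 0]) simp
  next
    case False
    have "last (P0 v) = Sp" using P0_snoc[OF vne] by simp
    moreover have "take ?m ?X \<noteq> []" using False Xne by simp
    ultimately have "last (take ?m ?X) = Sp" using v1 by simp
    then obtain j where j: "take ?m ?X = P0 (take j u)" "drop ?m ?X = P0 (drop j u)"
      using P0_boundary[OF pu, of ?m] mlt by auto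
    have "P0 v = P0 (drop j u @ take j u)" using v1 j by (simp add: P0_append)
    moreover have "\<forall>x\<in>set (drop j u @ take j u). x \<ge> 1" using pu
      by (auto dest: in_set_dropD in_set_takeD)
    ultimately have vu: "v = drop j u @ take j u" using P0_inj[OF pv] by blast
    show ?thesis
    proof (cases "j < length u")
      case True
      then show ?thesis using vu by (intro exI[of _ j]) (simp add: rotate_drop_take)
    next
      case False
      then show ?thesis using vu by (intro exI[of _ 0]) simp
    qed
  qed
qed




definition Cy :: "int \<Rightarrow> nat list \<Rightarrow> fl list" where
  "Cy n us = cyc (red (Phi (Wd n 1 us)))"

lemma cnt_P1:
  assumes pos: "\<forall>x\<in>set us. x \<ge> 1" and ne: "us \<noteq> []"
  shows "cntR (P1 us) = sum_list us" "cntS (P1 us) = length us - 1"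
proof -
  define Y where "Y = P0 (butlast us) @ rS (last us - 1)"
  have P0: "P0 us = Y @ [R, Sp]" using P0_snoc[OF ne] by (simp add: Y_def)
  have P1: "P1 us = Y @ [R, Sm]" by (simp add: P1_def P0 butlast_append)
  show "cntR (P1 us) = sum_list us" using cnt_P0[OF pos] P0 P1 by simp
  show "cntS (P1 us) = length us - 1" using cntS_P0[of us] P0 P1 by simp
qed

lemma Lfacts:
  assumes pos: "\<forall>x\<in>set us. x \<ge> 1"
  shows "cntR (Cy n us) \<le> sum_list us"
    and "us = [] \<or> (n + int (length us)) mod 3 \<noteq> 2 \<or> sum_list us = 1 \<Longrightarrow> cntR (Cy n us) = sum_list us"
    and "us \<noteq> [] \<Longrightarrow> (n + int (length us)) mod 3 = 2 \<Longrightarrow> cntR (Cy n us) = sum_list us \<Longrightarrow> sum_list us = 1"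
    and "us \<noteq> [] \<Longrightarrow> (n + int (length us)) mod 3 = 0 \<Longrightarrow> rot (Cy n us) (P0 us) \<and> cntS (Cy n us) = length us"
    and "us \<noteq> [] \<Longrightarrow> (n + int (length us)) mod 3 = 1 \<Longrightarrow> cntS (Cy n us) = length us - 1"
proof -
  obtain C0 where C0: "rot (Cy n us) C0"
    "us = [] \<longrightarrow> cntR C0 = 0"
    "us \<noteq> [] \<and> (n + int (length us)) mod 3 = 0 \<longrightarrow> C0 = P0 us"
    "us \<noteq> [] \<and> (n + int (length us)) mod 3 = 1 \<longrightarrow> C0 = P1 us"
    "us \<noteq> [] \<and> (n + int (length us)) mod 3 = 2 \<longrightarrow>
         (sum_list us = 1 \<and> cntR C0 = 1) \<or> (sum_list us \<ge> 2 \<and> cntR C0 + 2 \<le> sum_list us)"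
    using shape[OF pos, of n] unfolding Cy_def by blast
  have cR: "cntR (Cy n us) = cntR C0" and cS: "cntS (Cy n us) = cntS C0"
    using rot_count[OF C0(1)] by auto
  have m3: "(n + int (length us)) mod 3 = 0 \<or> (n + int (length us)) mod 3 = 1 \<or> (n + int (length us)) mod 3 = 2"
    by presburger
  show "cntR (Cy n us) \<le> sum_list us"
    using C0 cR m3 cnt_P0[OF pos] cnt_P1[OF pos] by (cases "us = []") auto
  show "us = [] \<or> (n + int (length us)) mod 3 \<noteq> 2 \<or> sum_list us = 1 \<Longrightarrow> cntR (Cy n us) = sum_list us"
    using C0 cR m3 cnt_P0[OF pos] cnt_P1[OF pos] by (cases "us = []") auto
  show "us \<noteq> [] \<Longrightarrow> (n + int (length us)) mod 3 = 2 \<Longrightarrow> cntR (Cy n us) = sum_list us \<Longrightarrow> sum_list us = 1"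
    using C0 cR by auto
  show "us \<noteq> [] \<Longrightarrow> (n + int (length us)) mod 3 = 0 \<Longrightarrow> rot (Cy n us) (P0 us) \<and> cntS (Cy n us) = length us"
    using C0 cS cntS_P0 by auto
  show "us \<noteq> [] \<Longrightarrow> (n + int (length us)) mod 3 = 1 \<Longrightarrow> cntS (Cy n us) = length us - 1"
    using C0 cS cnt_P1[OF pos] by auto
qed

lemma ex_Nil[simp]: "ex [] = 0" by (simp add: ex_def)

lemma ex_rep: "ex (concat (replicate k X)) = int k * ex X"
  by (induction k) (auto simp: algebra_simps)

lemma ex_dp: "ex (dp n) = 2 * n"
proof -
  have eD: "ex D = 2" "ex D' = -2" by (simp_all add: ex_def D_def D'_def inv_word_def)
  then show ?thesis by (auto simp: dp_def ex_rep)
qed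

lemma ex_Tw: "ex (Tw i) = 1"
  by (simp add: Tw_def tauI_def ex_def)

lemma ex_Bs: "ex (Bs j us) = int (sum_list us)"
proof (induction us arbitrary: j)
  case Nil then show ?case by (simp add: ex_def)
next
  case (Cons u us)
  have "ex (blk j u) = int u" by (simp add: blk_def ex_rep ex_Tw)
  then show ?case using Cons by simp
qed

lemma ex_Wd: "ex (Wd n 1 us) = 2 * n + int (sum_list us)"
  by (simp add: Wd_def ex_dp ex_Bs)




lemma conj_Cy: "braid_conj (Wd n 1 us) (Wd n' 1 us') \<Longrightarrow> rot (Cy n' us') (Cy n us)"
  unfolding Cy_def by (rule conj_inv)

lemma sum_ge_len: "\<forall>x\<in>set (us::nat list). x \<ge> 1 \<Longrightarrow> length us \<le> sum_list us"
  by (induction us) auto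

lemma bound:
  assumes pos: "\<forall>x\<in>set us. x \<ge> 1" and pos': "\<forall>x\<in>set us'. x \<ge> 1"
    and c: "braid_conj (Wd n 1 us) (Wd n' 1 us')"
    and L: "cntR (Cy n us) = sum_list us"
  shows "n' \<le> n" "n' = n \<Longrightarrow> sum_list us' = sum_list us \<and> cntR (Cy n' us') = sum_list us'"
proof -
  have e: "2 * n + int (sum_list us) = 2 * n' + int (sum_list us')"
    using conj_ex[OF c] by (simp add: ex_Wd)
  have r: "cntR (Cy n' us') = cntR (Cy n us)" using rot_count[OF conj_Cy[OF c]] .
  have "cntR (Cy n' us') \<le> sum_list us'" by (rule Lfacts(1)[OF pos'])
  then have le: "sum_list us \<le> sum_list us'" using r L by simp
  then show "n' \<le> n" using e by linarith
  show "n' = n \<Longrightarrow> sum_list us' = sum_list us \<and> cntR (Cy n' us') = sum_list us'"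
    using e r L by simp
qed

lemma in_nf_Wd: "in_xu_nf n us \<longleftrightarrow> (\<forall>n' us'. (\<forall>u\<in>set us'. u \<ge> 1) \<and>
      braid_conj (Wd n 1 us) (Wd n' 1 us') \<longrightarrow> xu_tuple_le n us n' us')"
  unfolding in_xu_nf_def xu_Wd ..

lemma pos_sum0: "\<forall>x\<in>set (us::nat list). x \<ge> 1 \<Longrightarrow> sum_list us = 0 \<Longrightarrow> us = []"
  using sum_ge_len[of us] by (cases us) auto

lemma NF_if:
  assumes pos: "\<forall>x\<in>set us. x \<ge> 1"
    and cond: "us = [] \<or>
     (length us = 1 \<and> (n mod 3 = 1 \<longrightarrow> us ! 0 = 1)) \<or>
     (length us \<ge> 2 \<and> (n + int (length us)) mod 3 = 0 \<and>
        (\<forall>k < length us. lex_le us (rotate k us)))"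
  shows "in_xu_nf n us"
  unfolding in_nf_Wd
proof (intro allI impI, elim conjE)
  fix n' us' assume pos': "\<forall>u\<in>set us'. u \<ge> 1" and c: "braid_conj (Wd n 1 us) (Wd n' 1 us')"
  have e: "2 * n + int (sum_list us) = 2 * n' + int (sum_list us')"
    using conj_ex[OF c] by (simp add: ex_Wd)
  consider "us = []" | "length us = 1" "n mod 3 = 1 \<longrightarrow> us ! 0 = 1"
    | "length us \<ge> 2" "(n + int (length us)) mod 3 = 0" "\<forall>k < length us. lex_le us (rotate k us)"
    using cond by blast
  then show "xu_tuple_le n us n' us'"
  proof cases
    case 1
    show ?thesis
    proof (cases "n' = n")
      case True
      then have "us' = []" using e 1 pos_sum0[OF pos'] by simp
      then show ?thesis using 1 True by (simp add: xu_tuple_le_def lex_le_def)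
    next
      case False
      then show ?thesis using e 1 by (simp add: xu_tuple_le_def)
    qed
  next
    case 2
    then obtain u where us: "us = [u]" by (cases us) auto
    have "us = [] \<or> (n + int (length us)) mod 3 \<noteq> 2 \<or> sum_list us = 1"
    proof (cases "n mod 3 = 1")
      case True then show ?thesis using 2 us by simp
    next
      case False then have "(n + 1) mod 3 \<noteq> 2" by presburger
      then show ?thesis using us by simp
    qed
    then have L: "cntR (Cy n us) = sum_list us" by (rule Lfacts(2)[OF pos])
    note b = bound[OF pos pos' c L]
    show ?thesis
    proof (cases "n' = n")
      case True
      then have s: "sum_list us' = u" using b(2) us by simp
      have u1: "u \<ge> 1" using pos us by simp
      then have "us' \<noteq> []" using s by auto
      then have l1: "length us' \<ge> 1" by (cases us') auto
      show ?thesis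
      proof (cases "length us' = 1")
        case l: True
        then obtain v where "us' = [v]" by (cases us') (auto simp: length_Suc_conv)
        then have "us' = us" using s us by simp
        then show ?thesis using True by (simp add: xu_tuple_le_def lex_le_def)
      next
        case False
        then have "length us < length us'" using l1 us by simp
        then show ?thesis using True by (simp add: xu_tuple_le_def)
      qed
    next
      case False
      then show ?thesis using b(1) by (simp add: xu_tuple_le_def)
    qed
  next
    case 3
    have ne: "us \<noteq> []" using 3 by auto
    have L: "cntR (Cy n us) = sum_list us" using 3 by (intro Lfacts(2)[OF pos]) simp
    note b = bound[OF pos pos' c L]
    show ?thesis
    proof (cases "n' = n")
      case False
      then show ?thesis using b(1) by (simp add: xu_tuple_le_def)
    next
      case True
      have s: "sum_list us' = sum_list us" and L': "cntR (Cy n' us') = sum_list us'"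
        using b(2)[OF True] by auto
      have "sum_list us \<ge> 2" using sum_ge_len[OF pos] 3 by simp
      have ne': "us' \<noteq> []"
      proof
        assume "us' = []"
        then have "sum_list us = 0" using s by simp
        then show False using \<open>sum_list us \<ge> 2\<close> by linarith
      qed
      have rCC: "rot (Cy n' us') (Cy n us)" by (rule conj_Cy[OF c])
      have R0: "rot (Cy n us) (P0 us)" "cntS (Cy n us) = length us" using Lfacts(4)[OF pos ne] 3 by auto
      consider "(n + int (length us')) mod 3 = 0" | "(n + int (length us')) mod 3 = 1"
        | "(n + int (length us')) mod 3 = 2" using mod3_cases' by blast
      then show ?thesis
      proof cases
        case 1
        have "rot (Cy n us') (P0 us')" using Lfacts(4)[OF pos' ne' 1] by simp
        then have "rot (P0 us') (P0 us)" using rot_trans[OF rot_trans[OF rot_sym rCC] R0(1)] True by simp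
        then obtain j where j: "us' = rotate j us" using P0_rot[OF pos pos' ne] by blast
        have jl: "j mod length us < length us" using ne by simp
        have "lex_le us (rotate (j mod length us) us)" using \<open>\<forall>k < length us. lex_le us (rotate k us)\<close> jl by blast
        moreover have "rotate (j mod length us) us = rotate j us" by (rule rotate_conv_mod[symmetric])
        ultimately have "lex_le us us'" using j by simp
        then show ?thesis using True j by (simp add: xu_tuple_le_def)
      next
        case 2
        have "cntS (Cy n us') = length us' - 1" using Lfacts(5)[OF pos' ne' 2] by simp
        moreover have "cntS (Cy n' us') = cntS (Cy n us)" using rot_count[OF rCC] .
        ultimately have "length us' = length us + 1" using R0(2) True ne' by (cases us') auto
        then show ?thesis using True by (simp add: xu_tuple_le_def)
      next
        case 3
        have "sum_list us' = 1" using Lfacts(3)[OF pos' ne' 3] L' True by simp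
        then show ?thesis using s \<open>sum_list us \<ge> 2\<close> by simp
      qed
    qed
  qed
qed




lemma notnf: "\<forall>x\<in>set us'. x \<ge> 1 \<Longrightarrow> braid_conj (Wd n 1 us) (Wd n' 1 us') \<Longrightarrow>
   \<not> xu_tuple_le n us n' us' \<Longrightarrow> \<not> in_xu_nf n us"
  unfolding in_nf_Wd by blast

lemma bigger:
  assumes c: "braid_conj (Wd n 1 us) (Wd n2 j us2)" and le: "n + 1 \<le> n2"
  shows "\<not> in_xu_nf n us"
proof -
  obtain n' j' us' where h: "Wd n2 j us2 \<approx> Wd n' j' us'" "n2 \<le> n'" "\<forall>x\<in>set us'. x \<ge> 1"
    using Wd_norm by blast
  have "braid_conj (Wd n 1 us) (Wd n' 1 us')"
    using bc_trans[OF bc_beq[OF c h(1)] Wd_to1] .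
  moreover have "\<not> xu_tuple_le n us n' us'" using h(2) le by (simp add: xu_tuple_le_def)
  ultimately show ?thesis using notnf h(3) by blast
qed

lemma rot_conj:
  assumes m: "(n + int (length us)) mod 3 = 0"
  shows "braid_conj (Wd n 1 us) (Wd n 1 (rotate k us))"
proof (induction k)
  case 0 then show ?case by (simp add: bc_refl)
next
  case (Suc k)
  let ?v = "rotate k us"
  have "braid_conj (Wd n 1 ?v) (Wd n 1 (rotate1 ?v))"
  proof (cases ?v)
    case Nil then show ?thesis by (simp add: bc_refl)
  next
    case (Cons x v')
    have lv: "length ?v = length us" by simp
    have "int (length us) = int (length v') + 1" using lv Cons by simp
    then have "(int (length v') + n + 1 + int 0) mod 3 = 0" using m by presburger
    from Wd_rot[OF this, of 1 x]
    have "braid_conj (Wd n 1 (v' @ [x])) (Wd n (1 + int (length v') + n) (x # v'))" by simp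
    then have "braid_conj (Wd n (1 + int (length v') + n) (x # v')) (Wd n 1 (v' @ [x]))" by (rule bc_sym)
    then have "braid_conj (Wd n 1 (x # v')) (Wd n 1 (v' @ [x]))"
      using bc_trans[OF bc_sym[OF Wd_to1]] by blast
    then show ?thesis using Cons by simp
  qed
  then show ?case using bc_trans[OF Suc.IH] by simp
qed

lemma NF_onlyif:
  assumes pos: "\<forall>x\<in>set us. x \<ge> 1" and nf: "in_xu_nf n us"
  shows "us = [] \<or>
     (length us = 1 \<and> (n mod 3 = 1 \<longrightarrow> us ! 0 = 1)) \<or>
     (length us \<ge> 2 \<and> (n + int (length us)) mod 3 = 0 \<and>
        (\<forall>k < length us. lex_le us (rotate k us)))"
proof (rule ccontr)
  assume nc: "\<not> ?thesis"
  then have ne: "us \<noteq> []" by auto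
  then obtain p u where us: "us = p @ [u]" by (cases us rule: rev_cases) auto
  have u1: "u \<ge> 1" using pos us by simp
  let ?m = "(n + int (length us)) mod 3"
  consider "?m = 2" | "?m = 1" | "?m = 0" using mod3_cases' by blast
  then show False
  proof cases
    case 1
    show False
    proof (cases "p = []")
      case True
      then have "length us = 1" using us by simp
      then have n1: "n mod 3 = 1" using 1 by presburger
      then have "u \<noteq> 1" using nc us True by auto
      then have u2: "u - 1 \<ge> 1" using u1 by simp
      have "Wd n 1 us = Wd n 1 ([] @ [u - 1, 0, 0, 1] @ [])"
        using Wd_merge[of n 1 "[]" "u - 1" 1 "[]"] us True u1 by simp
      also have "\<dots> = Wd n 1 ([u - 1, 0, 0] @ [1])" by simp
      finally have e1: "Wd n 1 us = Wd n 1 ([u - 1, 0, 0] @ [1])" .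
      have "(int (length [u - 1, 0, 0]) + n + 1 + int 1) mod 3 = 0" using n1 by simp presburger
      from Wd_rot[OF this, of 1 1]
      have c1: "braid_conj (Wd n 1 us) (Wd n (1 + 3 + n) ([] @ [1, 0, u - 1] @ [0, 0]))"
        using e1 by simp
      have "Wd n (1 + 3 + n) ([] @ [1, 0, u - 1] @ [0, 0]) \<approx>
            Wd (n + 1) (1 + 3 + n + 1) ([] @ [1 - 1, u - 1 - 1] @ [0, 0])"
        by (rule Wd_gap) (use u2 in auto)
      from bc_beq[OF c1 this] show False using bigger nf by blast
    next
      case False
      then obtain b p' where p: "p = b # p'" by (cases p) auto
      have b1: "b \<ge> 1" using pos us p by simp
      have "(int (length p) + n + 1 + int 1) mod 3 = 0" using 1 us by simp presburger
      from Wd_rot[OF this, of 1 u]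
      have c1: "braid_conj (Wd n 1 us) (Wd n (1 + int (length p) + n) ([] @ [u, 0, b] @ p'))"
        using us p by simp
      have "Wd n (1 + int (length p) + n) ([] @ [u, 0, b] @ p') \<approx>
            Wd (n + 1) (1 + int (length p) + n + 1) ([] @ [u - 1, b - 1] @ p')"
        by (rule Wd_gap) (use u1 b1 in auto)
      from bc_beq[OF c1 this] show False using bigger nf by blast
    qed
  next
    case 2
    show False
    proof (cases "p = []")
      case True
      then have "length us = 1" using us by simp
      then have "n mod 3 = 0" using 2 by presburger
      then show False using nc us True by simp
    next
      case False
      then obtain b p' where p: "p = b # p'" by (cases p) auto
      have b1: "b \<ge> 1" using pos us p by simp
      have "(int (length p) + n + 1 + int 2) mod 3 = 0" using 2 us by simp presburger
      from Wd_rot[OF this, of 1 u]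
      have c1: "braid_conj (Wd n 1 us) (Wd n (1 + int (length p) + n) ([] @ [u, 0, 0, b] @ p'))"
        using us p by (simp add: numeral_2_eq_2)
      then have "braid_conj (Wd n 1 us) (Wd n (1 + int (length p) + n) ([] @ [u + b] @ p'))"
        by (simp only: Wd_merge)
      then have c2: "braid_conj (Wd n 1 us) (Wd n 1 ((u + b) # p'))"
        using bc_trans[OF _ Wd_to1] by simp
      have pos2: "\<forall>x\<in>set ((u + b) # p'). x \<ge> 1" using pos us p by auto
      have "\<not> xu_tuple_le n us n ((u + b) # p')" using us p by (simp add: xu_tuple_le_def)
      then show False using notnf[OF pos2 c2] nf by blast
    qed
  next
    case 3
    show False
    proof (cases "p = []")
      case True
      then have "length us = 1" using us by simp
      then have "n mod 3 = 2" using 3 by presburger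
      then show False using nc us True by simp
    next
      case False
      then have "length us \<ge> 2" using us by (cases p) auto
      then obtain k where k: "k < length us" "\<not> lex_le us (rotate k us)" using nc 3 by auto
      have c: "braid_conj (Wd n 1 us) (Wd n 1 (rotate k us))" by (rule rot_conj[OF 3])
      have pos2: "\<forall>x\<in>set (rotate k us). x \<ge> 1" using pos by simp
      have "\<not> xu_tuple_le n us n (rotate k us)" using k by (simp add: xu_tuple_le_def)
      then show False using notnf[OF pos2 c] nf by blast
    qed
  qed
qed

theorem lemma2p3:
  fixes n :: int and us :: "nat list"
  assumes "\<forall>u\<in>set us. u \<ge> 1"
  shows "in_xu_nf n us \<longleftrightarrow>
    (us = [] \<or>
     (length us = 1 \<and> (n mod 3 = 1 \<longrightarrow> us ! 0 = 1)) \<or>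
     (length us \<ge> 2 \<and> (n + int (length us)) mod 3 = 0 \<and>
        (\<forall>k < length us. lex_le us (rotate k us))))"
proof
  assume "in_xu_nf n us"
  then show "us = [] \<or>
     (length us = 1 \<and> (n mod 3 = 1 \<longrightarrow> us ! 0 = 1)) \<or>
     (length us \<ge> 2 \<and> (n + int (length us)) mod 3 = 0 \<and>
        (\<forall>k < length us. lex_le us (rotate k us)))" by (rule NF_onlyif[OF assms])
next
  assume "us = [] \<or>
     (length us = 1 \<and> (n mod 3 = 1 \<longrightarrow> us ! 0 = 1)) \<or>
     (length us \<ge> 2 \<and> (n + int (length us)) mod 3 = 0 \<and>
        (\<forall>k < length us. lex_le us (rotate k us)))"
  then show "in_xu_nf n us" by (rule NF_if[OF assms])
qed


end
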